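(* Let $X$ be a definable set in the ordered Fraenkel–Mostowski model $\mathbf{ZFA}(\mathcal{Q})$ of set theory with atoms. Then its Stone–Čech compactification $\overline{X}$ is definable.
   Context: $\mathcal{Q}=\langle\mathbb{Q},\le\rangle$ is the rationals with their natural order. $\mathbf{ZFA}(\mathcal{Q})$ is the permutation model with atoms $\mathbb{Q}$ consisting of hereditarily finitely supported sets (supported by finite $A_0$ = fixed by all order-automorphisms fixing $A_0$ pointwise). A set is definable if for some finite $A_0$ it is supported by $A_0$ and has finitely many orbits under automorphisms fixing $A_0$ pointwise. $\overline{X}$ is the set of finitely supported ultrafilters on the Boolean algebra of finitely supported subsets of $X$. *)

theory Defs
  imports Complex_Main
begin

definition qaut :: "(rat \<Rightarrow> rat) set" where
  "qaut = {\<pi>. bij \<pi> \<and> (\<forall>x y. x \<le> y \<longleftrightarrow> \<pi> x \<le> \<pi> y)}"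

definition is_qaction :: "((rat \<Rightarrow> rat) \<Rightarrow> 'x \<Rightarrow> 'x) \<Rightarrow> bool" where
  "is_qaction act \<longleftrightarrow> act id = id \<and>
     (\<forall>\<pi>\<in>qaut. \<forall>\<sigma>\<in>qaut. act (\<pi> \<circ> \<sigma>) = act \<pi> \<circ> act \<sigma>)"

definition fixing :: "rat set \<Rightarrow> (rat \<Rightarrow> rat) set" where
  "fixing A = {\<pi>\<in>qaut. \<forall>a\<in>A. \<pi> a = a}"

definition supports :: "((rat \<Rightarrow> rat) \<Rightarrow> 'x \<Rightarrow> 'x) \<Rightarrow> rat set \<Rightarrow> 'x \<Rightarrow> bool" where
  "supports act A x \<longleftrightarrow> (\<forall>\<pi>\<in>fixing A. act \<pi> x = x)"

definition fin_supp :: "((rat \<Rightarrow> rat) \<Rightarrow> 'x \<Rightarrow> 'x) \<Rightarrow> 'x \<Rightarrow> bool" where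
  "fin_supp act x \<longleftrightarrow> (\<exists>A. finite A \<and> supports act A x)"

definition set_act :: "((rat \<Rightarrow> rat) \<Rightarrow> 'x \<Rightarrow> 'x) \<Rightarrow> (rat \<Rightarrow> rat) \<Rightarrow> 'x set \<Rightarrow> 'x set" where
  "set_act act \<pi> S = act \<pi> ` S"

definition orbit :: "((rat \<Rightarrow> rat) \<Rightarrow> 'x \<Rightarrow> 'x) \<Rightarrow> rat set \<Rightarrow> 'x \<Rightarrow> 'x set" where
  "orbit act A x = {act \<pi> x | \<pi>. \<pi> \<in> fixing A}"

(* X is a definable set (in the sense of ZFA(Q)): supported by a finite A,
   all its elements finitely supported (so X is a set of the model), and
   finitely many orbits under automorphisms fixing A pointwise *)
definition definable :: "((rat \<Rightarrow> rat) \<Rightarrow> 'x \<Rightarrow> 'x) \<Rightarrow> 'x set \<Rightarrow> bool" where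
  "definable act X \<longleftrightarrow> (\<exists>A. finite A \<and> supports (set_act act) A X \<and>
      (\<forall>x\<in>X. fin_supp act x) \<and> finite (orbit act A ` X))"

definition fs_subsets :: "((rat \<Rightarrow> rat) \<Rightarrow> 'x \<Rightarrow> 'x) \<Rightarrow> 'x set \<Rightarrow> 'x set set" where
  "fs_subsets act X = {S. S \<subseteq> X \<and> fin_supp (set_act act) S}"

definition is_ultrafilter_on :: "'x set \<Rightarrow> 'x set set \<Rightarrow> 'x set set \<Rightarrow> bool" where
  "is_ultrafilter_on X B U \<longleftrightarrow> U \<subseteq> B \<and> X \<in> U \<and> {} \<notin> U \<and>
     (\<forall>S\<in>U. \<forall>T\<in>B. S \<subseteq> T \<longrightarrow> T \<in> U) \<and>
     (\<forall>S\<in>U. \<forall>T\<in>U. S \<inter> T \<in> U) \<and>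
     (\<forall>S\<in>B. S \<in> U \<or> X - S \<in> U)"

(* Stone-Cech compactification: finitely supported ultrafilters *)
definition stone :: "((rat \<Rightarrow> rat) \<Rightarrow> 'x \<Rightarrow> 'x) \<Rightarrow> 'x set \<Rightarrow> 'x set set set" where
  "stone act X = {U. is_ultrafilter_on X (fs_subsets act X) U \<and>
                     fin_supp (set_act (set_act act)) U}"

end

theory Submission
  imports Defs
begin


lemma qaut_D: "\<pi> \<in> qaut \<Longrightarrow> bij \<pi> \<and> (\<forall>x y. x \<le> y \<longleftrightarrow> \<pi> x \<le> \<pi> y)"
  by (simp add: qaut_def)

lemma qaut_le[simp]: "\<pi> \<in> qaut \<Longrightarrow> \<pi> x \<le> \<pi> y \<longleftrightarrow> x \<le> y"
  unfolding qaut_def by blast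

lemma qaut_less[simp]: "\<pi> \<in> qaut \<Longrightarrow> \<pi> x < \<pi> y \<longleftrightarrow> x < y"
  using qaut_le by (metis less_le_not_le)

lemma qaut_eq[simp]: "\<pi> \<in> qaut \<Longrightarrow> \<pi> x = \<pi> y \<longleftrightarrow> x = y"
  by (metis order_antisym order_refl qaut_le)

lemma qaut_bij: "\<pi> \<in> qaut \<Longrightarrow> bij \<pi>" unfolding qaut_def by blast

lemma qaut_inj: "\<pi> \<in> qaut \<Longrightarrow> inj \<pi>" using qaut_bij bij_is_inj by blast

lemma qaut_surj: "\<pi> \<in> qaut \<Longrightarrow> surj \<pi>" using qaut_bij bij_is_surj by blast

lemma qaut_id[simp]: "id \<in> qaut" unfolding qaut_def by simp

lemma qaut_comp: "\<pi> \<in> qaut \<Longrightarrow> \<sigma> \<in> qaut \<Longrightarrow> \<pi> \<circ> \<sigma> \<in> qaut"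
proof -
  assume a: "\<pi> \<in> qaut" "\<sigma> \<in> qaut"
  have "bij (\<pi> \<circ> \<sigma>)" using a qaut_bij bij_comp by blast
  moreover have "\<forall>x y. x \<le> y \<longleftrightarrow> (\<pi> \<circ> \<sigma>) x \<le> (\<pi> \<circ> \<sigma>) y" using a by simp
  ultimately show ?thesis unfolding qaut_def by blast
qed

lemma qaut_inv_l[simp]: "\<pi> \<in> qaut \<Longrightarrow> inv \<pi> (\<pi> x) = x"
  by (simp add: qaut_inj)

lemma qaut_inv_r[simp]: "\<pi> \<in> qaut \<Longrightarrow> \<pi> (inv \<pi> x) = x"
  by (simp add: qaut_surj surj_f_inv_f)

lemma qaut_inv: "\<pi> \<in> qaut \<Longrightarrow> inv \<pi> \<in> qaut"
proof -
  assume a: "\<pi> \<in> qaut"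
  have "bij (inv \<pi>)" using a by (simp add: qaut_bij bij_imp_bij_inv)
  moreover have "\<forall>x y. x \<le> y \<longleftrightarrow> inv \<pi> x \<le> inv \<pi> y"
  proof (intro allI)
    fix x y
    show "x \<le> y \<longleftrightarrow> inv \<pi> x \<le> inv \<pi> y"
      using qaut_le[OF a, of "inv \<pi> x" "inv \<pi> y"] a by simp
  qed
  ultimately show ?thesis unfolding qaut_def by blast
qed

lemma qaut_comp_inv1: "\<pi> \<in> qaut \<Longrightarrow> \<pi> \<circ> inv \<pi> = id" by (rule ext) simp
lemma qaut_comp_inv2: "\<pi> \<in> qaut \<Longrightarrow> inv \<pi> \<circ> \<pi> = id" by (rule ext) simp

lemma strict_mono_surj_qaut:
  fixes \<pi> :: "rat \<Rightarrow> rat"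
  assumes m: "\<And>x y. x < y \<Longrightarrow> \<pi> x < \<pi> y" and "surj \<pi>"
  shows "\<pi> \<in> qaut"
proof -
  have le: "x \<le> y \<longleftrightarrow> \<pi> x \<le> \<pi> y" for x y
  proof
    assume "x \<le> y" then show "\<pi> x \<le> \<pi> y"
      using m[of x y] by (cases "x = y") auto
  next
    assume "\<pi> x \<le> \<pi> y" then show "x \<le> y"
      using m[of y x] by (meson not_le)
  qed
  have "inj \<pi>" unfolding inj_def
  proof (intro allI impI)
    fix x y assume e: "\<pi> x = \<pi> y" show "x = y"
    proof (rule ccontr)
      assume "x \<noteq> y" then have "x < y \<or> y < x" by auto
      then show False using m[of x y] m[of y x] e by auto
    qed
  qed
  then show ?thesis using le assms(2) unfolding qaut_def bij_def by blast
qed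

lemma fixing_comp: "\<pi> \<in> fixing A \<Longrightarrow> \<sigma> \<in> fixing A \<Longrightarrow> \<pi> \<circ> \<sigma> \<in> fixing A"
  by (auto simp: fixing_def qaut_comp)

lemma fixing_inv: "\<pi> \<in> fixing A \<Longrightarrow> inv \<pi> \<in> fixing A"
  unfolding fixing_def
proof (safe)
  assume "\<pi> \<in> qaut" then show "inv \<pi> \<in> qaut" by (rule qaut_inv)
next
  fix a assume "\<pi> \<in> qaut" "\<forall>a\<in>A. \<pi> a = a" "a \<in> A"
  then show "inv \<pi> a = a" using qaut_inv_l[of \<pi> a] by simp
qed

lemma fixing_id[simp]: "id \<in> fixing A" by (simp add: fixing_def)

lemma fixing_mono: "A \<subseteq> B \<Longrightarrow> fixing B \<subseteq> fixing A"
  by (auto simp: fixing_def)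

lemma fixing_qaut: "\<pi> \<in> fixing A \<Longrightarrow> \<pi> \<in> qaut" by (simp add: fixing_def)

lemma move_right:
  fixes u p q :: rat
  assumes "u < p" "u < q"
  shows "\<exists>\<pi>\<in>qaut. (\<forall>t\<le>u. \<pi> t = t) \<and> \<pi> p = q"
proof -
  define k where "k = (q - u) / (p - u)"
  have k: "k > 0" using assms by (simp add: k_def)
  define \<pi> where "\<pi> t = (if t \<le> u then t else if t \<le> p then u + (t - u) * k else t - p + q)" for t
  have pp: "u + (p - u) * k = q" using assms by (simp add: k_def)
  have mono: "\<pi> x < \<pi> y" if "x < y" for x y
  proof -
    have a: "u + (x - u) * k < u + (y - u) * k" using that k by simp
    have b: "t \<le> p \<Longrightarrow> u + (t - u) * k \<le> q" for t
      using pp k by (metis add_le_cancel_left diff_right_mono mult_right_mono order_less_imp_le)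
    have c: "u < t \<Longrightarrow> u < u + (t - u) * k" for t using k by simp
    show ?thesis
    proof (cases "y \<le> u")
      case True then show ?thesis using that by (simp add: \<pi>_def)
    next
      case yu: False
      show ?thesis
      proof (cases "y \<le> p")
        case True
        show ?thesis
        proof (cases "x \<le> u")
          case True then show ?thesis using yu \<open>y \<le> p\<close> c[of y] by (simp add: \<pi>_def)
        next
          case False then show ?thesis using yu \<open>y \<le> p\<close> that a by (simp add: \<pi>_def)
        qed
      next
        case yp: False
        have "\<pi> y = y - p + q" using yp yu by (simp add: \<pi>_def)
        moreover have "\<pi> x < y - p + q"
        proof (cases "x \<le> u")
          case True then show ?thesis using yp assms by (simp add: \<pi>_def)
        next
          case xu: False
          show ?thesis
          proof (cases "x \<le> p")
            case True
            have "u + (x - u) * k \<le> q" using b[of x] True by simp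
            moreover have "q < y - p + q" using yp by simp
            ultimately show ?thesis using xu True by (simp add: \<pi>_def)
          next
            case False then show ?thesis using xu that by (simp add: \<pi>_def)
          qed
        qed
        ultimately show ?thesis by simp
      qed
    qed
  qed
  have "surj \<pi>"
  proof
    show "UNIV \<subseteq> range \<pi>"
    proof
      fix y :: rat
      show "y \<in> range \<pi>"
      proof (cases "y \<le> u")
        case True then have "\<pi> y = y" by (simp add: \<pi>_def)
        then show ?thesis by (metis rangeI)
      next
        case False
        show ?thesis
        proof (cases "y \<le> q")
          case True
          define x where "x = u + (y - u) / k"
          have x1: "u < x" using False k by (simp add: x_def)
          have "(y - u) / k \<le> (q - u) / k" using True k by (simp add: divide_right_mono)
          then have x2: "x \<le> p" using k assms by (simp add: x_def k_def)
          have "\<pi> x = y" using x1 x2 k by (simp add: \<pi>_def x_def)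
          then show ?thesis by (metis rangeI)
        next
          case False
          define x where "x = y - q + p"
          have x1: "\<not> x \<le> u" "\<not> x \<le> p" using False assms by (auto simp: x_def)
          have "\<pi> x = y" using x1 by (simp add: \<pi>_def x_def)
          then show ?thesis by (metis rangeI)
        qed
      qed
    qed
  qed simp
  then have "\<pi> \<in> qaut" using mono strict_mono_surj_qaut by blast
  moreover have "\<forall>t\<le>u. \<pi> t = t" by (simp add: \<pi>_def)
  moreover have "\<pi> p = q" using pp assms by (simp add: \<pi>_def)
  ultimately show ?thesis by blast
qed

lemma homogeneous:
  fixes F :: "rat set" and p :: "rat \<Rightarrow> rat"
  assumes "finite F" "\<forall>x\<in>F. \<forall>y\<in>F. x < y \<longrightarrow> p x < p y"
  shows "\<exists>\<pi>\<in>qaut. \<forall>x\<in>F. \<pi> x = p x"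
  using assms
proof (induction F rule: finite_linorder_max_induct)
  case empty
  then show ?case using qaut_id by blast
next
  case (insert b A)
  then obtain \<pi>0 where p0: "\<pi>0 \<in> qaut" "\<forall>x\<in>A. \<pi>0 x = p x" by auto
  obtain u where u: "u < \<pi>0 b" "u < p b" "\<forall>a\<in>A. p a \<le> u"
  proof (cases "A = {}")
    case True
    then show ?thesis using that[of "min (\<pi>0 b) (p b) - 1"] by auto
  next
    case False
    define m where "m = Max A"
    have m: "m \<in> A" "\<forall>a\<in>A. a \<le> m" using False insert(1) by (auto simp: m_def)
    have "\<forall>a\<in>A. p a \<le> p m"
    proof
      fix a assume a: "a \<in> A"
      show "p a \<le> p m"
      proof (cases "a = m")
        case False then have "a < m" using m a by (simp add: order_le_neq_trans)
        then have "p a < p m" using insert(4) a m(1) by blast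
        then show ?thesis by simp
      qed simp
    qed
    moreover have "p m < \<pi>0 b"
    proof -
      have "m < b" using m insert(2) by blast
      then have "\<pi>0 m < \<pi>0 b" using p0(1) by simp
      then show ?thesis using p0(2) m(1) by simp
    qed
    moreover have "p m < p b" using m insert(2,4) by blast
    ultimately show ?thesis using that by blast
  qed
  obtain \<sigma> where s: "\<sigma> \<in> qaut" "\<forall>t\<le>u. \<sigma> t = t" "\<sigma> (\<pi>0 b) = p b"
    using move_right[OF u(1,2)] by blast
  have "\<sigma> \<circ> \<pi>0 \<in> qaut" using s p0 qaut_comp by blast
  moreover have "\<forall>x\<in>insert b A. (\<sigma> \<circ> \<pi>0) x = p x"
  proof
    fix x assume "x \<in> insert b A"
    then show "(\<sigma> \<circ> \<pi>0) x = p x"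
    proof
      assume "x = b" then show ?thesis using s by simp
    next
      assume x: "x \<in> A"
      then have "\<pi>0 x = p x" using p0 by blast
      moreover have "p x \<le> u" using u x by blast
      ultimately show ?thesis using s by simp
    qed
  qed
  ultimately show ?case by blast
qed


lemma act_comp:
  assumes "is_qaction act" "\<pi> \<in> qaut" "\<sigma> \<in> qaut"
  shows "act \<pi> (act \<sigma> x) = act (\<pi> \<circ> \<sigma>) x"
proof -
  have "act (\<pi> \<circ> \<sigma>) = act \<pi> \<circ> act \<sigma>" using assms unfolding is_qaction_def by blast
  then show ?thesis by simp
qed

lemma act_id: "is_qaction act \<Longrightarrow> act id x = x"
proof -
  assume "is_qaction act"
  then have "act id = id" unfolding is_qaction_def by blast
  then show ?thesis by simp
qed

lemma act_inv_l[simp]: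
  assumes "is_qaction act" "\<pi> \<in> qaut"
  shows "act (inv \<pi>) (act \<pi> x) = x"
proof -
  have "act (inv \<pi>) (act \<pi> x) = act (inv \<pi> \<circ> \<pi>) x"
    by (rule act_comp[OF assms(1) qaut_inv[OF assms(2)] assms(2)])
  also have "\<dots> = x" unfolding qaut_comp_inv2[OF assms(2)] by (rule act_id[OF assms(1)])
  finally show ?thesis .
qed

lemma act_inv_r[simp]:
  assumes "is_qaction act" "\<pi> \<in> qaut"
  shows "act \<pi> (act (inv \<pi>) x) = x"
proof -
  have "act \<pi> (act (inv \<pi>) x) = act (\<pi> \<circ> inv \<pi>) x"
    by (rule act_comp[OF assms(1) assms(2) qaut_inv[OF assms(2)]])
  also have "\<dots> = x" unfolding qaut_comp_inv1[OF assms(2)] by (rule act_id[OF assms(1)])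
  finally show ?thesis .
qed

lemma act_eq_iff[simp]:
  assumes "is_qaction act" "\<pi> \<in> qaut"
  shows "act \<pi> x = act \<pi> y \<longleftrightarrow> x = y"
  using act_inv_l[OF assms, of x] act_inv_l[OF assms, of y] by metis

lemma set_act_qaction:
  assumes "is_qaction act"
  shows "is_qaction (set_act act)"
  unfolding is_qaction_def
proof (intro conjI ballI)
  show "set_act act id = id"
    by (rule ext) (simp add: set_act_def act_id[OF assms])
next
  fix \<pi> \<sigma> assume "\<pi> \<in> qaut" "\<sigma> \<in> qaut"
  then show "set_act act (\<pi> \<circ> \<sigma>) = set_act act \<pi> \<circ> set_act act \<sigma>"
  proof (intro ext)
    fix S
    have "act (\<pi> \<circ> \<sigma>) = act \<pi> \<circ> act \<sigma>" using assms \<open>\<pi> \<in> qaut\<close> \<open>\<sigma> \<in> qaut\<close>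
      unfolding is_qaction_def by blast
    then show "set_act act (\<pi> \<circ> \<sigma>) S = (set_act act \<pi> \<circ> set_act act \<sigma>) S"
      unfolding set_act_def by (simp add: image_comp)
  qed
qed

lemma supports_mono: "C \<subseteq> D \<Longrightarrow> supports act C x \<Longrightarrow> supports act D x"
  unfolding supports_def using fixing_mono by blast

lemma supportsD: "supports act C x \<Longrightarrow> \<pi> \<in> fixing C \<Longrightarrow> act \<pi> x = x"
  unfolding supports_def by blast

lemma supports_act:
  assumes "is_qaction act" "\<pi> \<in> qaut" "supports act C x"
  shows "supports act (\<pi> ` C) (act \<pi> x)"
  unfolding supports_def
proof
  fix \<sigma> assume s: "\<sigma> \<in> fixing (\<pi> ` C)"
  define \<tau> where "\<tau> = inv \<pi> \<circ> \<sigma> \<circ> \<pi>"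
  have sq: "\<sigma> \<in> qaut" using s fixing_qaut by blast
  have tq: "\<tau> \<in> qaut" unfolding \<tau>_def using assms(2) sq qaut_inv qaut_comp by blast
  have "\<forall>c\<in>C. \<tau> c = c"
  proof
    fix c assume "c \<in> C"
    then have "\<sigma> (\<pi> c) = \<pi> c" using s unfolding fixing_def by blast
    then show "\<tau> c = c" unfolding \<tau>_def using assms(2) by simp
  qed
  then have "\<tau> \<in> fixing C" using tq unfolding fixing_def by blast
  then have tx: "act \<tau> x = x" by (rule supportsD[OF assms(3)])
  have e: "\<pi> \<circ> \<tau> = \<sigma> \<circ> \<pi>" unfolding \<tau>_def using assms(2) by (intro ext) simp
  have "act \<sigma> (act \<pi> x) = act (\<sigma> \<circ> \<pi>) x" by (rule act_comp[OF assms(1) sq assms(2)])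
  also have "\<dots> = act (\<pi> \<circ> \<tau>) x" using e by simp
  also have "\<dots> = act \<pi> (act \<tau> x)" by (rule act_comp[OF assms(1) assms(2) tq, symmetric])
  also have "\<dots> = act \<pi> x" using tx by simp
  finally show "act \<sigma> (act \<pi> x) = act \<pi> x" .
qed

lemma fin_supp_act:
  assumes "is_qaction act" "\<pi> \<in> qaut" "fin_supp act x"
  shows "fin_supp act (act \<pi> x)"
proof -
  obtain C where "finite C" "supports act C x" using assms(3) unfolding fin_supp_def by blast
  then have "finite (\<pi> ` C)" "supports act (\<pi> ` C) (act \<pi> x)"
    using supports_act[OF assms(1,2)] by auto
  then show ?thesis unfolding fin_supp_def by blast
qed

lemma point_move:
  fixes K :: "rat set"
  assumes "finite K" "t0 \<notin> K" "t1 \<notin> K" "\<forall>k\<in>K. k < t0 \<longleftrightarrow> k < t1"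
  shows "\<exists>\<rho>\<in>fixing K. \<rho> t0 = t1"
proof -
  define p where "p t = (if t = t0 then t1 else t)" for t
  have "\<forall>x\<in>insert t0 K. \<forall>y\<in>insert t0 K. x < y \<longrightarrow> p x < p y"
  proof (intro ballI impI)
    fix x y assume x: "x \<in> insert t0 K" and y: "y \<in> insert t0 K" and xy: "x < y"
    show "p x < p y"
    proof (cases "x = t0")
      case True
      then have "y \<in> K" "y \<noteq> t0" using y xy by auto
      moreover have "\<not> y < t1" using assms(4) \<open>y \<in> K\<close> xy True by auto
      moreover have "y \<noteq> t1" using assms(3) \<open>y \<in> K\<close> by auto
      ultimately have "t1 < y" by auto
      then show ?thesis using True \<open>y \<noteq> t0\<close> by (simp add: p_def)
    next
      case False
      then have xK: "x \<in> K" using x by auto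
      show ?thesis
      proof (cases "y = t0")
        case True
        then show ?thesis using False xK xy assms(4) by (auto simp: p_def)
      next
        case False
        then show ?thesis using \<open>x \<noteq> t0\<close> xy by (simp add: p_def)
      qed
    qed
  qed
  then obtain \<rho> where r: "\<rho> \<in> qaut" "\<forall>x\<in>insert t0 K. \<rho> x = p x"
    using homogeneous[of "insert t0 K" p] assms(1) by blast
  have "\<forall>k\<in>K. \<rho> k = k" using r assms(2) by (auto simp: p_def)
  then have "\<rho> \<in> fixing K" using r by (simp add: fixing_def)
  moreover have "\<rho> t0 = t1" using r by (simp add: p_def)
  ultimately show ?thesis by blast
qed

lemma gap_above:
  fixes F :: "rat set"
  assumes "finite F" "a \<notin> F"
  shows "\<exists>b>a. b \<notin> F \<and> (\<forall>f\<in>F. f < a \<longleftrightarrow> f < b)"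
proof (cases "{f\<in>F. a < f} = {}")
  case True
  have "\<forall>f\<in>F. f < a"
  proof
    fix f assume f: "f \<in> F"
    then have "f \<noteq> a" using assms(2) by auto
    moreover have "\<not> a < f" using True f by blast
    ultimately show "f < a" by auto
  qed
  then show ?thesis
    by (intro exI[of _ "a + 1"]) auto
next
  case False
  define m where "m = Min {f\<in>F. a < f}"
  have fin: "finite {f\<in>F. a < f}" using assms by simp
  have m: "m \<in> F" "a < m" "\<forall>f\<in>F. a < f \<longrightarrow> m \<le> f"
    using Min_in[OF fin False] Min_le[OF fin] by (auto simp: m_def)
  define b where "b = (a + m) / 2"
  have b: "a < b" "b < m" using m(2) by (auto simp: b_def)
  have "b \<notin> F"
  proof
    assume "b \<in> F" then have "m \<le> b" using m(3) b(1) by blast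
    then show False using b(2) by simp
  qed
  moreover have "\<forall>f\<in>F. f < a \<longleftrightarrow> f < b"
  proof
    fix f assume f: "f \<in> F"
    show "f < a \<longleftrightarrow> f < b"
    proof
      assume "f < a" then show "f < b" using b by simp
    next
      assume fb: "f < b"
      show "f < a"
      proof (rule ccontr)
        assume "\<not> f < a"
        then have "a < f" using f assms(2) by (cases "f = a") auto
        then have "m \<le> f" using m(3) f by blast
        then show False using fb b by simp
      qed
    qed
  qed
  ultimately show ?thesis using b by blast
qed

lemma gap_below:
  fixes F :: "rat set"
  assumes "finite F" "a \<notin> F"
  shows "\<exists>b<a. b \<notin> F \<and> (\<forall>f\<in>F. f < a \<longleftrightarrow> f < b)"
proof (cases "{f\<in>F. f < a} = {}")
  case True
  then show ?thesis
    by (intro exI[of _ "a - 1"]) auto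
next
  case False
  define m where "m = Max {f\<in>F. f < a}"
  have fin: "finite {f\<in>F. f < a}" using assms by simp
  have m: "m \<in> F" "m < a" "\<forall>f\<in>F. f < a \<longrightarrow> f \<le> m"
    using Max_in[OF fin False] Max_ge[OF fin] by (auto simp: m_def)
  define b where "b = (a + m) / 2"
  have b: "b < a" "m < b" using m(2) by (auto simp: b_def)
  have "b \<notin> F"
  proof
    assume "b \<in> F" then have "b \<le> m" using m(3) b(1) by blast
    then show False using b(2) by simp
  qed
  moreover have "\<forall>f\<in>F. f < a \<longleftrightarrow> f < b"
  proof
    fix f assume f: "f \<in> F"
    show "f < a \<longleftrightarrow> f < b"
    proof
      assume "f < a" then have "f \<le> m" using m(3) f by blast
      then show "f < b" using b by simp
    next
      assume "f < b" then show "f < a" using b by simp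
    qed
  qed
  ultimately show ?thesis using b by blast
qed


lemma support_remove1:
  assumes act: "is_qaction act" and fC: "finite C" and fD: "finite D"
    and aC: "a \<in> C" and aD: "a \<notin> D"
    and sC: "supports act C x" and sD: "supports act D x"
  shows "supports act (C - {a}) x"
  unfolding supports_def
proof
  fix \<pi> assume pf: "\<pi> \<in> fixing (C - {a})"
  have pq: "\<pi> \<in> qaut" using pf fixing_qaut by blast
  have pfix: "\<forall>c\<in>C - {a}. \<pi> c = c" using pf unfolding fixing_def by blast
  define F where "F = (C - {a}) \<union> D"
  have fF: "finite F" using fC fD by (simp add: F_def)
  have aF: "a \<notin> F" using aD by (simp add: F_def)
  \<comment> \<open>moving a within its F-gap preserves being a support\<close>
  have claim: "supports act (insert b (C - {a})) x"
    if b1: "b \<notin> F" and b2: "\<forall>f\<in>F. f < a \<longleftrightarrow> f < b" for b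
  proof -
    obtain \<rho> where r: "\<rho> \<in> fixing F" "\<rho> a = b"
      using point_move[OF fF aF b1 b2] by blast
    have rq: "\<rho> \<in> qaut" using r fixing_qaut by blast
    have "\<rho> \<in> fixing D" using r(1) fixing_mono[of D F] by (auto simp: F_def)
    then have rx: "act \<rho> x = x" by (rule supportsD[OF sD])
    have rF: "\<forall>f\<in>F. \<rho> f = f" using r(1) unfolding fixing_def by blast
    have "\<rho> ` C = insert b (C - {a})"
    proof -
      have "C = insert a (C - {a})" using aC by blast
      then have "\<rho> ` C = insert (\<rho> a) (\<rho> ` (C - {a}))" by (metis image_insert)
      also have "\<rho> ` (C - {a}) = C - {a}" using rF unfolding F_def by force
      finally show ?thesis using r(2) by simp
    qed
    then show ?thesis using supports_act[OF act rq sC] rx by simp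
  qed
  define a' where "a' = \<pi> a"
  obtain b where b: "b \<notin> F" "\<forall>f\<in>F. f < a \<longleftrightarrow> f < b" "b \<noteq> a'" "b < a' \<longleftrightarrow> b < a" "b \<noteq> a"
  proof (cases "a' \<le> a")
    case True
    obtain b where "b > a" "b \<notin> F" "\<forall>f\<in>F. f < a \<longleftrightarrow> f < b" using gap_above[OF fF aF] by blast
    then show ?thesis using that True by auto
  next
    case False
    obtain b where "b < a" "b \<notin> F" "\<forall>f\<in>F. f < a \<longleftrightarrow> f < b" using gap_below[OF fF aF] by blast
    then show ?thesis using that False by auto
  qed
  have sb: "supports act (insert b (C - {a})) x" using claim b(1,2) by blast
  define c0 where "c0 = inv \<pi> b"
  have pc0: "\<pi> c0 = b" using pq by (simp add: c0_def)
  have c0a: "c0 \<noteq> a" using pc0 b(3) a'_def by auto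
  have bC: "b \<notin> C" using b(1,5) by (auto simp: F_def)
  have c0C: "c0 \<notin> C"
  proof
    assume "c0 \<in> C"
    then have "c0 \<in> C - {a}" using c0a by simp
    then have "\<pi> c0 = c0" using pfix by blast
    then have "b \<in> C" using pc0 \<open>c0 \<in> C\<close> by simp
    then show False using bC by simp
  qed
  have ord: "\<forall>k\<in>C. k < c0 \<longleftrightarrow> k < b"
  proof
    fix k assume k: "k \<in> C"
    show "k < c0 \<longleftrightarrow> k < b"
    proof (cases "k = a")
      case True
      have "a < c0 \<longleftrightarrow> \<pi> a < \<pi> c0" using pq by simp
      also have "\<dots> \<longleftrightarrow> a' < b" using pc0 a'_def by simp
      also have "\<dots> \<longleftrightarrow> a < b" using b(3,4,5) by auto
      finally show ?thesis using True by simp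
    next
      case False
      then have "\<pi> k = k" using pfix k by blast
      then show ?thesis using qaut_less[OF pq, of k c0] pc0 by simp
    qed
  qed
  obtain \<tau> where t: "\<tau> \<in> fixing C" "\<tau> c0 = b"
    using point_move[OF fC c0C bC ord] by blast
  have tq: "\<tau> \<in> qaut" using t fixing_qaut by blast
  have tx: "act \<tau> x = x" by (rule supportsD[OF sC t(1)])
  define \<sigma> where "\<sigma> = \<pi> \<circ> inv \<tau>"
  have sq: "\<sigma> \<in> qaut" unfolding \<sigma>_def using pq tq qaut_inv qaut_comp by blast
  have itb: "inv \<tau> b = c0" using t(2) tq qaut_inv_l by metis
  have "\<forall>c\<in>insert b (C - {a}). \<sigma> c = c"
  proof
    fix c assume c: "c \<in> insert b (C - {a})"
    show "\<sigma> c = c"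
    proof (cases "c = b")
      case True then show ?thesis using itb pc0 by (simp add: \<sigma>_def)
    next
      case False
      then have c1: "c \<in> C - {a}" using c by simp
      have "\<tau> c = c" using t(1) c1 unfolding fixing_def by blast
      then have "inv \<tau> c = c" using tq qaut_inv_l by metis
      then show ?thesis using pfix c1 by (simp add: \<sigma>_def)
    qed
  qed
  then have "\<sigma> \<in> fixing (insert b (C - {a}))" using sq unfolding fixing_def by blast
  then have sx: "act \<sigma> x = x" by (rule supportsD[OF sb])
  have e: "\<sigma> \<circ> \<tau> = \<pi>" unfolding \<sigma>_def using tq by (intro ext) simp
  have "act \<pi> x = act (\<sigma> \<circ> \<tau>) x" using e by simp
  also have "\<dots> = act \<sigma> (act \<tau> x)" by (rule act_comp[OF act sq tq, symmetric])
  finally show "act \<pi> x = x" using tx sx by simp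
qed

lemma support_remove:
  assumes act: "is_qaction act" and fE: "finite E"
  shows "finite C \<Longrightarrow> finite D \<Longrightarrow> E \<subseteq> C \<Longrightarrow> E \<inter> D = {} \<Longrightarrow>
    supports act C x \<Longrightarrow> supports act D x \<Longrightarrow> supports act (C - E) x"
  using fE
proof (induction E rule: finite_induct)
  case empty
  then show ?case by simp
next
  case (insert a E)
  have fC: "finite C" and fD: "finite D" and sub: "insert a E \<subseteq> C" and dis: "insert a E \<inter> D = {}"
    and sC: "supports act C x" and sD: "supports act D x" using insert.prems by auto
  have s: "supports act (C - E) x" using insert.IH fC fD sub dis sC sD by auto
  have "a \<in> C - E" using insert(2) sub by auto
  moreover have "a \<notin> D" using dis by auto
  moreover have "finite (C - E)" using fC by simp
  ultimately have "supports act (C - E - {a}) x"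
    using support_remove1[OF act _ fD _ _ s sD] by blast
  moreover have "C - E - {a} = C - insert a E" by auto
  ultimately show ?case by simp
qed

lemma support_inter:
  assumes act: "is_qaction act" and "finite C" "finite D"
    and "supports act C x" "supports act D x"
  shows "supports act (C \<inter> D) x"
proof -
  have "supports act (C - (C - D)) x"
    using support_remove[OF act _ assms(2,3)] assms by auto
  moreover have "C - (C - D) = C \<inter> D" by auto
  ultimately show ?thesis by simp
qed

definition supp :: "((rat \<Rightarrow> rat) \<Rightarrow> 'x \<Rightarrow> 'x) \<Rightarrow> 'x \<Rightarrow> rat set" where
  "supp act x = \<Inter> {C. finite C \<and> supports act C x}"

lemma supp_least:
  assumes act: "is_qaction act" and fs: "fin_supp act x"
  shows "finite (supp act x)" "supports act (supp act x) x"
    "\<And>D. finite D \<Longrightarrow> supports act D x \<Longrightarrow> supp act x \<subseteq> D"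
proof -
  define P where "P n \<longleftrightarrow> (\<exists>C. finite C \<and> supports act C x \<and> card C = n)" for n
  have "\<exists>n. P n" using fs unfolding fin_supp_def P_def by blast
  then have "P (LEAST n. P n)" by (rule LeastI_ex)
  then obtain C0 where C0: "finite C0" "supports act C0 x" "card C0 = (LEAST n. P n)"
    unfolding P_def by blast
  have min: "card C0 \<le> card C" if "finite C" "supports act C x" for C
  proof -
    have "P (card C)" unfolding P_def using that by blast
    then have "(LEAST n. P n) \<le> card C" by (rule Least_le)
    then show ?thesis using C0(3) by simp
  qed
  have sub: "C0 \<subseteq> D" if D: "finite D" "supports act D x" for D
  proof -
    have "supports act (C0 \<inter> D) x" using support_inter[OF act C0(1) D(1) C0(2) D(2)] .
    then have "card C0 \<le> card (C0 \<inter> D)" using min C0(1) by simp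
    then have "C0 \<inter> D = C0" using card_subset_eq[OF C0(1), of "C0 \<inter> D"] C0(1)
      by (meson Int_lower1 card_mono le_antisym)
    then show ?thesis by blast
  qed
  have eq: "supp act x = C0"
  proof
    show "supp act x \<subseteq> C0" unfolding supp_def using C0(1,2) by blast
    show "C0 \<subseteq> supp act x" unfolding supp_def using sub by blast
  qed
  show "finite (supp act x)" "supports act (supp act x) x" using eq C0 by auto
  show "\<And>D. finite D \<Longrightarrow> supports act D x \<Longrightarrow> supp act x \<subseteq> D" using eq sub by blast
qed

lemma supp_act:
  assumes act: "is_qaction act" and pq: "\<pi> \<in> qaut" and fs: "fin_supp act x"
  shows "supp act (act \<pi> x) = \<pi> ` supp act x"
proof
  have fs2: "fin_supp act (act \<pi> x)" using fin_supp_act[OF act pq fs] .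
  show "supp act (act \<pi> x) \<subseteq> \<pi> ` supp act x"
    using supp_least(3)[OF act fs2] supp_least(1,2)[OF act fs] supports_act[OF act pq] by blast
  have iq: "inv \<pi> \<in> qaut" using pq qaut_inv by blast
  have "supports act (inv \<pi> ` supp act (act \<pi> x)) (act (inv \<pi>) (act \<pi> x))"
    using supports_act[OF act iq supp_least(2)[OF act fs2]] .
  then have "supports act (inv \<pi> ` supp act (act \<pi> x)) x" using act pq by simp
  then have "supp act x \<subseteq> inv \<pi> ` supp act (act \<pi> x)"
    using supp_least(3)[OF act fs] supp_least(1)[OF act fs2] by blast
  then have "\<pi> ` supp act x \<subseteq> \<pi> ` inv \<pi> ` supp act (act \<pi> x)" by blast
  also have "\<dots> = supp act (act \<pi> x)" using pq by (simp add: image_comp)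
  finally show "\<pi> ` supp act x \<subseteq> supp act (act \<pi> x)" .
qed

lemma setwise_fix:
  fixes C :: "rat set"
  assumes pq: "\<pi> \<in> qaut" and fC: "finite C" and e: "\<pi> ` C = C"
  shows "\<forall>c\<in>C. \<pi> c = c"
proof (rule ccontr)
  assume "\<not> (\<forall>c\<in>C. \<pi> c = c)"
  then have ne: "{c\<in>C. \<pi> c \<noteq> c} \<noteq> {}" by blast
  define c where "c = Min {c\<in>C. \<pi> c \<noteq> c}"
  have fin: "finite {c\<in>C. \<pi> c \<noteq> c}" using fC by simp
  have c: "c \<in> C" "\<pi> c \<noteq> c" using Min_in[OF fin ne] by (auto simp: c_def)
  have cmin: "\<And>d. d \<in> C \<Longrightarrow> \<pi> d \<noteq> d \<Longrightarrow> c \<le> d" using Min_le[OF fin] by (auto simp: c_def)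
  show False
  proof (cases "\<pi> c < c")
    case True
    have "\<pi> c \<in> C" using e c(1) by blast
    moreover have "\<pi> (\<pi> c) \<noteq> \<pi> c" using c(2) pq by simp
    ultimately have "c \<le> \<pi> c" using cmin by blast
    then show False using True by simp
  next
    case False
    then have gt: "c < \<pi> c" using c(2) by simp
    obtain d where d: "d \<in> C" "\<pi> d = c" using e c(1) by (metis imageE)
    have "d \<noteq> c" using d c(2) by auto
    show False
    proof (cases "d < c")
      case True
      then have "\<pi> d = d" using cmin d(1) by force
      then show False using d(2) \<open>d \<noteq> c\<close> by simp
    next
      case False
      then have "c < d" using \<open>d \<noteq> c\<close> by simp
      then have "\<pi> c < \<pi> d" using pq by simp
      then show False using gt d(2) by simp
    qed
  qed
qed

lemma supp_eq_imp_eq: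
  assumes act: "is_qaction act" and pq: "\<pi> \<in> qaut" and fs: "fin_supp act x"
    and e: "supp act (act \<pi> x) = supp act x"
  shows "act \<pi> x = x"
proof -
  have "\<pi> ` supp act x = supp act x" using e supp_act[OF act pq fs] by simp
  then have "\<forall>c\<in>supp act x. \<pi> c = c" using setwise_fix[OF pq supp_least(1)[OF act fs]] by blast
  then have "\<pi> \<in> fixing (supp act x)" using pq unfolding fixing_def by blast
  then show ?thesis by (rule supportsD[OF supp_least(2)[OF act fs]])
qed


lemma sorted_list_map_qaut:
  fixes S :: "rat set"
  assumes pq: "\<pi> \<in> qaut" and fS: "finite S"
  shows "sorted_list_of_set (\<pi> ` S) = map \<pi> (sorted_list_of_set S)"
proof -
  have "sorted_wrt (<) (sorted_list_of_set S)" by simp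
  then have "sorted_wrt (<) (map \<pi> (sorted_list_of_set S))"
    using pq by (simp add: sorted_wrt_map)
  moreover have "set (map \<pi> (sorted_list_of_set S)) = \<pi> ` S" using fS by simp
  moreover have "sorted_wrt (<) (sorted_list_of_set (\<pi> ` S))" by simp
  moreover have "set (sorted_list_of_set (\<pi> ` S)) = \<pi> ` S" using fS by simp
  ultimately show ?thesis using strict_sorted_equal by metis
qed

definition crd :: "((rat \<Rightarrow> rat) \<Rightarrow> 'x \<Rightarrow> 'x) \<Rightarrow> 'x \<Rightarrow> nat \<Rightarrow> rat" where
  "crd act x j = sorted_list_of_set (supp act x) ! j"

definition nsp :: "((rat \<Rightarrow> rat) \<Rightarrow> 'x \<Rightarrow> 'x) \<Rightarrow> 'x \<Rightarrow> nat" where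
  "nsp act x = card (supp act x)"

lemma crd_mono:
  assumes act: "is_qaction act" and fs: "fin_supp act x" and jk: "j < k" "k < nsp act x"
  shows "crd act x j < crd act x k"
proof -
  have "sorted_wrt (<) (sorted_list_of_set (supp act x))" by simp
  moreover have "length (sorted_list_of_set (supp act x)) = nsp act x"
    by (simp add: nsp_def)
  ultimately show ?thesis unfolding crd_def using jk by (simp add: sorted_wrt_iff_nth_less)
qed

lemma crd_inj:
  assumes act: "is_qaction act" and fs: "fin_supp act x" and jk: "j < nsp act x" "k < nsp act x"
    and e: "crd act x j = crd act x k"
  shows "j = k"
  using crd_mono[OF act fs] jk e by (metis less_irrefl nat_neq_iff)

lemma supp_crd:
  assumes act: "is_qaction act" and fs: "fin_supp act x"
  shows "supp act x = crd act x ` {..<nsp act x}"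
proof -
  have fin: "finite (supp act x)" using supp_least(1)[OF act fs] .
  have "supp act x = set (sorted_list_of_set (supp act x))" using fin by simp
  also have "\<dots> = (\<lambda>j. sorted_list_of_set (supp act x) ! j) ` {..<length (sorted_list_of_set (supp act x))}"
    by (auto simp: set_conv_nth image_def lessThan_def)
  finally show ?thesis by (simp add: crd_def nsp_def)
qed

lemma nsp_act:
  assumes act: "is_qaction act" and pq: "\<pi> \<in> qaut" and fs: "fin_supp act x"
  shows "nsp act (act \<pi> x) = nsp act x"
  unfolding nsp_def supp_act[OF act pq fs] using qaut_inj[OF pq]
  by (simp add: card_image inj_on_def)

lemma crd_act:
  assumes act: "is_qaction act" and pq: "\<pi> \<in> qaut" and fs: "fin_supp act x" and j: "j < nsp act x"
  shows "crd act (act \<pi> x) j = \<pi> (crd act x j)"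
proof -
  have fin: "finite (supp act x)" using supp_least(1)[OF act fs] .
  have "crd act (act \<pi> x) j = sorted_list_of_set (\<pi> ` supp act x) ! j"
    unfolding crd_def supp_act[OF act pq fs] ..
  also have "\<dots> = map \<pi> (sorted_list_of_set (supp act x)) ! j"
    using sorted_list_map_qaut[OF pq fin] by simp
  also have "\<dots> = \<pi> (crd act x j)" using j by (simp add: crd_def nsp_def)
  finally show ?thesis .
qed

lemma cell_lemma:
  assumes act: "is_qaction act" and fs: "fin_supp act x" and hq: "h \<in> qaut"
    and y: "y = act h x" and fC: "finite C"
    and lt: "\<forall>j<nsp act x. \<forall>c\<in>C. c < crd act x j \<longleftrightarrow> c < crd act y j"
    and eq: "\<forall>j<nsp act x. \<forall>c\<in>C. crd act x j = c \<longleftrightarrow> crd act y j = c"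
  shows "\<exists>g\<in>fixing C. act g x = y"
proof -
  define n where "n = nsp act x"
  have fsy: "fin_supp act y" using fin_supp_act[OF act hq fs] y by simp
  have ny: "nsp act y = n" using nsp_act[OF act hq fs] y n_def by simp
  define idx where "idx t = (THE j. j < n \<and> crd act x j = t)" for t
  have idx: "idx (crd act x j) = j" if "j < n" for j
    unfolding idx_def
  proof (rule the_equality)
    show "j < n \<and> crd act x j = crd act x j" using that by simp
    fix k assume "k < n \<and> crd act x k = crd act x j"
    then show "k = j" using crd_inj[OF act fs, of k j] that n_def by simp
  qed
  define p where "p t = (if t \<in> C then t else crd act y (idx t))" for t
  have pC: "p c = c" if "c \<in> C" for c using that by (simp add: p_def)
  have pX: "p (crd act x j) = crd act y j" if j: "j < n" for j
  proof (cases "crd act x j \<in> C")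
    case True
    then have "crd act y j = crd act x j" using eq j n_def by blast
    then show ?thesis using True by (simp add: p_def)
  next
    case False then show ?thesis using idx j by (simp add: p_def)
  qed
  define F where "F = C \<union> crd act x ` {..<n}"
  have fF: "finite F" using fC by (simp add: F_def)
  have mono: "\<forall>s\<in>F. \<forall>t\<in>F. s < t \<longrightarrow> p s < p t"
  proof (intro ballI impI)
    fix s t assume s: "s \<in> F" and t: "t \<in> F" and st: "s < t"
    show "p s < p t"
    proof (cases "s \<in> C")
      case sC: True
      show ?thesis
      proof (cases "t \<in> C")
        case True then show ?thesis using sC st pC by simp
      next
        case False
        then obtain k where k: "k < n" "t = crd act x k" using t by (auto simp: F_def)
        have "s < crd act y k" using lt sC st k n_def by blast
        then show ?thesis using sC k pC pX by simp
      qed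
    next
      case sC: False
      then obtain j where j: "j < n" "s = crd act x j" using s by (auto simp: F_def)
      show ?thesis
      proof (cases "t \<in> C")
        case True
        have "\<not> t < crd act x j" "crd act x j \<noteq> t" using st j by auto
        then have "\<not> t < crd act y j" "crd act y j \<noteq> t" using lt eq True j n_def by blast+
        then have "crd act y j < t" by auto
        then show ?thesis using True j pC pX by simp
      next
        case False
        then obtain k where k: "k < n" "t = crd act x k" using t by (auto simp: F_def)
        have "j < k"
        proof (rule ccontr)
          assume "\<not> j < k"
          then have "k \<le> j" by simp
          then have "crd act x k \<le> crd act x j"
            using crd_mono[OF act fs, of k j] j n_def by (cases "k = j") auto
          then show False using st j k by simp
        qed
        then have "crd act y j < crd act y k" using crd_mono[OF act fsy] k ny by simp
        then show ?thesis using j k pX by simp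
      qed
    qed
  qed
  obtain g where g: "g \<in> qaut" "\<forall>t\<in>F. g t = p t" using homogeneous[OF fF mono] by blast
  have "\<forall>c\<in>C. g c = c" using g(2) pC unfolding F_def by simp
  then have gC: "g \<in> fixing C" using g(1) unfolding fixing_def by blast
  have gx: "\<forall>j<n. g (crd act x j) = crd act y j" using g(2) pX unfolding F_def by simp
  define k where "k = g \<circ> inv h"
  have kq: "k \<in> qaut" unfolding k_def using g(1) hq qaut_inv qaut_comp by blast
  have x: "x = act (inv h) y" using y act hq by simp
  have gxk: "act g x = act k y"
    unfolding x k_def by (rule act_comp[OF act g(1) qaut_inv[OF hq]])
  have "supp act (act g x) = g ` supp act x" by (rule supp_act[OF act g(1) fs])
  also have "\<dots> = g ` crd act x ` {..<n}" using supp_crd[OF act fs] n_def by simp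
  also have "\<dots> = crd act y ` {..<n}" unfolding image_comp
    by (rule image_cong) (simp_all add: gx)
  also have "\<dots> = supp act y" using supp_crd[OF act fsy] ny by simp
  finally have "supp act (act k y) = supp act y" using gxk by simp
  then have "act k y = y" by (rule supp_eq_imp_eq[OF act kq fsy])
  then show ?thesis using gC gxk by auto
qed


section \<open>Ultrafilter lemmas\<close>

lemma uf_p1: "is_ultrafilter_on X B U \<Longrightarrow> U \<subseteq> B"
  unfolding is_ultrafilter_on_def by (elim conjE) assumption

lemma uf_p2: "is_ultrafilter_on X B U \<Longrightarrow> X \<in> U"
  unfolding is_ultrafilter_on_def by (elim conjE) assumption

lemma uf_p3: "is_ultrafilter_on X B U \<Longrightarrow> {} \<notin> U"
  unfolding is_ultrafilter_on_def by (elim conjE) assumption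

lemma uf_p4: "is_ultrafilter_on X B U \<Longrightarrow> \<forall>S\<in>U. \<forall>T\<in>B. S \<subseteq> T \<longrightarrow> T \<in> U"
  unfolding is_ultrafilter_on_def by (elim conjE) assumption

lemma uf_p5: "is_ultrafilter_on X B U \<Longrightarrow> \<forall>S\<in>U. \<forall>T\<in>U. S \<inter> T \<in> U"
  unfolding is_ultrafilter_on_def by (elim conjE) assumption

lemma uf_p6: "is_ultrafilter_on X B U \<Longrightarrow> \<forall>S\<in>B. S \<in> U \<or> X - S \<in> U"
  unfolding is_ultrafilter_on_def by (elim conjE) assumption

lemmas uf_parts = uf_p1 uf_p2 uf_p3 uf_p4 uf_p5 uf_p6

lemma uf_sub: "is_ultrafilter_on X B U \<Longrightarrow> S \<in> U \<Longrightarrow> S \<in> B"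
  using uf_parts(1) by (rule subsetD)

lemma uf_X: "is_ultrafilter_on X B U \<Longrightarrow> X \<in> U"
  by (rule uf_parts(2))

lemma uf_empty: "is_ultrafilter_on X B U \<Longrightarrow> {} \<notin> U"
  by (rule uf_parts(3))

lemma uf_up: "is_ultrafilter_on X B U \<Longrightarrow> S \<in> U \<Longrightarrow> T \<in> B \<Longrightarrow> S \<subseteq> T \<Longrightarrow> T \<in> U"
  using uf_parts(4) by metis

lemma uf_int: "is_ultrafilter_on X B U \<Longrightarrow> S \<in> U \<Longrightarrow> T \<in> U \<Longrightarrow> S \<inter> T \<in> U"
  using uf_parts(5) by metis

lemma uf_compl: "is_ultrafilter_on X B U \<Longrightarrow> S \<in> B \<Longrightarrow> S \<notin> U \<Longrightarrow> X - S \<in> U"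
  using uf_parts(6) by metis

lemma uf_finite_inter:
  assumes u: "is_ultrafilter_on X B U" and fI: "finite I"
  shows "(\<forall>i\<in>I. Y i \<in> U) \<Longrightarrow> X \<inter> \<Inter> (Y ` I) \<in> U"
  using fI
proof (induction I rule: finite_induct)
  case empty
  then show ?case using uf_X[OF u] by simp
next
  case (insert i I)
  then have "X \<inter> \<Inter> (Y ` I) \<in> U" "Y i \<in> U" by auto
  then have "(X \<inter> \<Inter> (Y ` I)) \<inter> Y i \<in> U" using uf_int[OF u] by blast
  moreover have "(X \<inter> \<Inter> (Y ` I)) \<inter> Y i = X \<inter> \<Inter> (Y ` insert i I)" by auto
  ultimately show ?case by simp
qed

lemma uf_cover:
  assumes u: "is_ultrafilter_on X B U" and fO: "finite Os" and OB: "Os \<subseteq> B"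
    and cov: "X \<subseteq> \<Union> Os"
  shows "\<exists>W\<in>Os. W \<in> U"
proof (rule ccontr)
  assume "\<not> (\<exists>W\<in>Os. W \<in> U)"
  then have "\<forall>W\<in>Os. X - W \<in> U" using uf_compl[OF u] OB by blast
  then have "X \<inter> \<Inter> ((\<lambda>W. X - W) ` Os) \<in> U" using uf_finite_inter[OF u fO] by blast
  moreover have "X \<inter> \<Inter> ((\<lambda>W. X - W) ` Os) = {}" using cov by blast
  ultimately show False using uf_empty[OF u] by simp
qed

lemma uf_disj: "is_ultrafilter_on X B U \<Longrightarrow> S \<in> U \<Longrightarrow> T \<in> U \<Longrightarrow> S \<inter> T \<noteq> {}"
proof
  assume u: "is_ultrafilter_on X B U" and "S \<in> U" "T \<in> U" "S \<inter> T = {}"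
  then have "{} \<in> U" using uf_int[OF u] by metis
  then show False using uf_empty[OF u] by simp
qed

lemma uf_image:
  assumes u: "is_ultrafilter_on X B U"
    and hX: "h ` X = X"
    and hB: "\<And>S. S \<in> B \<Longrightarrow> h ` S \<in> B" and hB2: "\<And>S. S \<in> B \<Longrightarrow> g ` S \<in> B"
    and hinv1: "\<And>x. h (g x) = x" and hinv2: "\<And>x. g (h x) = x"
  shows "is_ultrafilter_on X B ((\<lambda>S. h ` S) ` U)"
proof -
  have injh: "inj h"
  proof (rule injI)
    fix x y assume "h x = h y" then have "g (h x) = g (h y)" by simp
    then show "x = y" using hinv2 by simp
  qed
  have bk1: "\<And>T. h ` (g ` T) = T" using hinv1 by (simp add: image_image)
  have bk2: "\<And>T. g ` (h ` T) = T" using hinv2 by (simp add: image_image)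
  have s1: "(\<lambda>S. h ` S) ` U \<subseteq> B" using uf_sub[OF u] hB by blast
  have s2: "X \<in> (\<lambda>S. h ` S) ` U" by (rule image_eqI[where f="\<lambda>S. h ` S", OF hX[symmetric] uf_X[OF u]])
  have s3: "{} \<notin> (\<lambda>S. h ` S) ` U" using uf_empty[OF u] by auto
  have s4: "\<forall>S\<in>(\<lambda>S. h ` S) ` U. \<forall>T\<in>B. S \<subseteq> T \<longrightarrow> T \<in> (\<lambda>S. h ` S) ` U"
  proof (intro ballI impI)
    fix S T assume S: "S \<in> (\<lambda>S. h ` S) ` U" and T: "T \<in> B" and ST: "S \<subseteq> T"
    obtain S0 where S0: "S0 \<in> U" "S = h ` S0" using S by blast
    have "S0 \<subseteq> g ` T" using ST S0(2) bk2[of S0] by blast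
    then have "g ` T \<in> U" using uf_up[OF u S0(1) hB2[OF T]] by blast
    then show "T \<in> (\<lambda>S. h ` S) ` U" using bk1[of T, symmetric] by (intro image_eqI)
  qed
  have s5: "\<forall>S\<in>(\<lambda>S. h ` S) ` U. \<forall>T\<in>(\<lambda>S. h ` S) ` U. S \<inter> T \<in> (\<lambda>S. h ` S) ` U"
  proof (intro ballI)
    fix S T assume S: "S \<in> (\<lambda>S. h ` S) ` U" and T: "T \<in> (\<lambda>S. h ` S) ` U"
    obtain S0 where S0: "S0 \<in> U" "S = h ` S0" using S by blast
    obtain T0 where T0: "T0 \<in> U" "T = h ` T0" using T by blast
    have "S \<inter> T = h ` (S0 \<inter> T0)" using S0 T0 injh by (simp add: image_Int)
    then show "S \<inter> T \<in> (\<lambda>S. h ` S) ` U" using uf_int[OF u S0(1) T0(1)] by blast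
  qed
  have s6: "\<forall>S\<in>B. S \<in> (\<lambda>S. h ` S) ` U \<or> X - S \<in> (\<lambda>S. h ` S) ` U"
  proof
    fix S assume S: "S \<in> B"
    have "g ` S \<in> U \<or> X - g ` S \<in> U" using uf_parts(6)[OF u] hB2[OF S] by blast
    moreover have "h ` (g ` S) = S" by (rule bk1)
    moreover have "h ` (X - g ` S) = X - S"
      using hX injh by (simp add: image_set_diff bk1)
    ultimately show "S \<in> (\<lambda>S. h ` S) ` U \<or> X - S \<in> (\<lambda>S. h ` S) ` U"
      by (metis image_eqI)
  qed
  show ?thesis unfolding is_ultrafilter_on_def using s1 s2 s3 s4 s5 s6 by (intro conjI)
qed

section \<open>Downward closed invariant sets of rationals\<close>

lemma downclosed_class:
  fixes D B :: "rat set"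
  assumes fB: "finite B" and down: "\<And>q q'. q \<in> D \<Longrightarrow> q' < q \<Longrightarrow> q' \<in> D"
    and inv: "\<And>\<pi> q. \<pi> \<in> fixing B \<Longrightarrow> q \<in> D \<Longrightarrow> \<pi> q \<in> D"
  shows "D = {} \<or> D = UNIV \<or> (\<exists>b. D = {..<b}) \<or> (\<exists>b. D = {..b})"
proof (cases "D = {} \<or> D = UNIV")
  case True then show ?thesis by blast
next
  case False
  then obtain q r where q: "q \<in> D" and r: "r \<notin> D" by blast
  \<comment> \<open>within a gap of B, membership is constant upwards\<close>
  have gapup: "t' \<in> D" if t: "t \<in> D" "t < t'" "\<forall>b\<in>B. \<not> (t \<le> b \<and> b \<le> t')" for t t'
  proof -
    have "t \<notin> B" "t' \<notin> B" using that by auto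
    moreover have "\<forall>k\<in>B. k < t \<longleftrightarrow> k < t'"
    proof
      fix k assume k: "k \<in> B"
      show "k < t \<longleftrightarrow> k < t'"
      proof
        assume "k < t" then show "k < t'" using t(2) by simp
      next
        assume kt: "k < t'"
        have "\<not> (t \<le> k \<and> k \<le> t')" using t(3) k by blast
        then show "k < t" using kt by auto
      qed
    qed
    ultimately obtain \<rho> where "\<rho> \<in> fixing B" "\<rho> t = t'" using point_move[OF fB] by blast
    then show ?thesis using inv t(1) by metis
  qed
  define K where "K = {b \<in> insert q B. b \<in> D}"
  define L where "L = {b \<in> insert r B. b \<notin> D}"
  have fK: "finite K" "K \<noteq> {}" using fB q by (auto simp: K_def)
  have fL: "finite L" "L \<noteq> {}" using fB r by (auto simp: L_def)
  define m where "m = Max K"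
  define M where "M = Min L"
  have m: "m \<in> D" "m \<in> insert q B" "\<And>b. b \<in> B \<Longrightarrow> b \<in> D \<Longrightarrow> b \<le> m"
    using Max_in[OF fK] Max_ge[OF fK(1)] by (auto simp: m_def K_def)
  have M: "M \<notin> D" "M \<in> insert r B" "\<And>b. b \<in> B \<Longrightarrow> b \<notin> D \<Longrightarrow> M \<le> b"
    using Min_in[OF fL] Min_le[OF fL(1)] by (auto simp: M_def L_def)
  have mM: "m < M"
  proof (rule ccontr)
    assume "\<not> m < M" then have "M \<le> m" by simp
    then have "M \<in> D" using m(1) down by (cases "M = m") auto
    then show False using M(1) by simp
  qed
  have nob: "\<forall>b\<in>B. \<not> (m < b \<and> b < M)"
  proof
    fix b assume b: "b \<in> B"
    show "\<not> (m < b \<and> b < M)"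
    proof (cases "b \<in> D")
      case True then show ?thesis using m(3)[OF b] by simp
    next
      case False then show ?thesis using M(3)[OF b] by simp
    qed
  qed
  define t where "t = (m + M) / 2"
  have t: "m < t" "t < M" using mM by (auto simp: t_def)
  show ?thesis
  proof (cases "t \<in> D")
    case True
    have "D = {..<M}"
    proof
      show "D \<subseteq> {..<M}"
      proof
        fix x assume x: "x \<in> D"
        show "x \<in> {..<M}"
        proof (rule ccontr)
          assume "x \<notin> {..<M}" then have "M \<le> x" by simp
          then have "M \<in> D" using x down by (cases "M = x") auto
          then show False using M(1) by simp
        qed
      qed
      show "{..<M} \<subseteq> D"
      proof
        fix x assume "x \<in> {..<M}" then have xM: "x < M" by simp
        show "x \<in> D"
        proof (cases "x \<le> t")
          case True then show ?thesis using \<open>t \<in> D\<close> down by (cases "x = t") auto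
        next
          case False
          then have "t < x" by simp
          moreover have "\<forall>b\<in>B. \<not> (t \<le> b \<and> b \<le> x)" using nob t xM by force
          ultimately show ?thesis using gapup[OF \<open>t \<in> D\<close>] by blast
        qed
      qed
    qed
    then show ?thesis by blast
  next
    case False
    have "D = {..m}"
    proof
      show "{..m} \<subseteq> D"
      proof
        fix x assume "x \<in> {..m}" then have "x \<le> m" by simp
        then show "x \<in> D" using m(1) down by (cases "x = m") auto
      qed
      show "D \<subseteq> {..m}"
      proof
        fix x assume x: "x \<in> D"
        show "x \<in> {..m}"
        proof (rule ccontr)
          assume "x \<notin> {..m}" then have mx: "m < x" by simp
          show False
          proof (cases "x < t")
            case True
            have "\<forall>b\<in>B. \<not> (x \<le> b \<and> b \<le> t)" using nob t mx True by force
            then have "t \<in> D" using gapup[OF x True] by blast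
            then show False using \<open>t \<notin> D\<close> by simp
          next
            case False
            then have "t \<in> D" using x down by (cases "x = t") auto
            then show False using \<open>t \<notin> D\<close> by simp
          qed
        qed
      qed
    qed
    then show ?thesis by blast
  qed
qed

section \<open>Shapes of sets of rationals\<close>

definition shape :: "rat set \<Rightarrow> nat" where
  "shape D = (if D = {} then 0 else if D = UNIV then 1 else if (\<exists>b. D = {..<b}) then 2
     else if (\<exists>b. D = {..b}) then 3 else if (\<exists>b. D = {b}) then 4 else 5)"

definition pt :: "rat set \<Rightarrow> rat" where
  "pt D = (if (\<exists>b. D = {..<b}) then (THE b. D = {..<b}) else if (\<exists>b. D = {..b}) then (THE b. D = {..b})
     else if (\<exists>b. D = {b}) then (THE b. D = {b}) else 0)"

lemma lessThan_inj_rat: "{..<(b::rat)} = {..<b'} \<Longrightarrow> b = b'"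
  by (metis lessThan_iff linorder_neqE order_less_irrefl)

lemma atMost_inj_rat: "{..(b::rat)} = {..b'} \<Longrightarrow> b = b'"
  by (simp add: atMost_eq_iff)

lemma shape_le: "shape D \<le> 5" by (simp add: shape_def)

lemma shape0: "shape D = 0 \<Longrightarrow> D = {}"
  by (simp add: shape_def split: if_splits)

lemma shape1: "shape D = 1 \<Longrightarrow> D = UNIV"
  by (simp add: shape_def split: if_splits)

lemma shape2: "shape D = 2 \<Longrightarrow> D = {..<pt D}"
proof -
  assume s: "shape D = 2"
  then obtain b where b: "D = {..<b}" by (simp add: shape_def split: if_splits)
  have "pt D = (THE b. D = {..<b})" using b by (simp add: pt_def)
  also have "\<dots> = b" using b lessThan_inj_rat by blast
  finally show ?thesis using b by simp
qed

lemma shape3: "shape D = 3 \<Longrightarrow> D = {..pt D}"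
proof -
  assume s: "shape D = 3"
  then have n2: "\<not> (\<exists>b. D = {..<b})" by (simp add: shape_def split: if_splits)
  obtain b where b: "D = {..b}" using s by (simp add: shape_def split: if_splits)
  have "pt D = (THE b. D = {..b})" using b n2 by (simp add: pt_def)
  also have "\<dots> = b" using b atMost_inj_rat by blast
  finally show ?thesis using b by simp
qed

lemma shape4: "shape D = 4 \<Longrightarrow> D = {pt D}"
proof -
  assume s: "shape D = 4"
  then have n2: "\<not> (\<exists>b. D = {..<b})" "\<not> (\<exists>b. D = {..b})" by (simp_all add: shape_def split: if_splits)
  obtain b where b: "D = {b}" using s by (simp add: shape_def split: if_splits)
  have "pt D = (THE b'. D = {b'})" using b n2 by (simp add: pt_def)
  also have "\<dots> = b" using b by auto
  finally show ?thesis using b by simp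
qed

lemma shape_lt5: "D = {} \<or> D = UNIV \<or> (\<exists>b. D = {..<b}) \<or> (\<exists>b. D = {..b}) \<or> (\<exists>b. D = {b}) \<Longrightarrow> shape D < 5"
  by (auto simp: shape_def)

lemma qaut_image_lessThan: "\<pi> \<in> qaut \<Longrightarrow> \<pi> ` {..<b} = {..<\<pi> b}"
proof
  assume pq: "\<pi> \<in> qaut"
  show "\<pi> ` {..<b} \<subseteq> {..<\<pi> b}" using pq by auto
  show "{..<\<pi> b} \<subseteq> \<pi> ` {..<b}"
  proof
    fix y assume "y \<in> {..<\<pi> b}"
    then have "inv \<pi> y < b" using pq qaut_less[OF pq, of "inv \<pi> y" b] by simp
    moreover have "y = \<pi> (inv \<pi> y)" using pq by simp
    ultimately show "y \<in> \<pi> ` {..<b}" by blast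
  qed
qed

lemma qaut_image_atMost: "\<pi> \<in> qaut \<Longrightarrow> \<pi> ` {..b} = {..\<pi> b}"
proof
  assume pq: "\<pi> \<in> qaut"
  show "\<pi> ` {..b} \<subseteq> {..\<pi> b}" using pq by auto
  show "{..\<pi> b} \<subseteq> \<pi> ` {..b}"
  proof
    fix y assume "y \<in> {..\<pi> b}"
    then have "inv \<pi> y \<le> b" using pq qaut_le[OF pq, of "inv \<pi> y" b] by simp
    moreover have "y = \<pi> (inv \<pi> y)" using pq by simp
    ultimately show "y \<in> \<pi> ` {..b}" by blast
  qed
qed

lemma qaut_image_UNIV: "\<pi> \<in> qaut \<Longrightarrow> \<pi> ` UNIV = UNIV"
  using qaut_surj by blast

lemma finite_factor:
  assumes "finite (h ` S)" and "\<forall>x\<in>S. \<forall>y\<in>S. h x = h y \<longrightarrow> f x = f y"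
  shows "finite (f ` S)"
proof -
  define g where "g k = f (SOME x. x \<in> S \<and> h x = k)" for k
  have "f ` S \<subseteq> g ` (h ` S)"
  proof
    fix z assume "z \<in> f ` S"
    then obtain x where x: "x \<in> S" "z = f x" by blast
    then have "\<exists>y. y \<in> S \<and> h y = h x" by blast
    then have "(SOME y. y \<in> S \<and> h y = h x) \<in> S \<and> h (SOME y. y \<in> S \<and> h y = h x) = h x"
      by (rule someI_ex)
    then have "g (h x) = z" using assms(2) x unfolding g_def by metis
    then show "z \<in> g ` (h ` S)" using x by blast
  qed
  then show ?thesis using assms(1) finite_subset by blast
qed

lemma orbit_self: "x \<in> orbit act A x" if "is_qaction act" for act :: "(rat \<Rightarrow> rat) \<Rightarrow> 'x \<Rightarrow> 'x"
  unfolding orbit_def using act_id[OF that] fixing_id by (metis (mono_tags, lifting) mem_Collect_eq)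

lemma orbit_act:
  assumes act: "is_qaction act" and pf: "\<pi> \<in> fixing A"
  shows "orbit act A (act \<pi> x) = orbit act A x"
proof
  have pq: "\<pi> \<in> qaut" using pf fixing_qaut by blast
  show "orbit act A (act \<pi> x) \<subseteq> orbit act A x"
  proof
    fix y assume "y \<in> orbit act A (act \<pi> x)"
    then obtain \<sigma> where s: "\<sigma> \<in> fixing A" "y = act \<sigma> (act \<pi> x)" unfolding orbit_def by blast
    then have "y = act (\<sigma> \<circ> \<pi>) x" using act_comp[OF act _ pq] fixing_qaut by metis
    moreover have "\<sigma> \<circ> \<pi> \<in> fixing A" using fixing_comp s(1) pf by blast
    ultimately show "y \<in> orbit act A x" unfolding orbit_def by blast
  qed
  show "orbit act A x \<subseteq> orbit act A (act \<pi> x)"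
  proof
    fix y assume "y \<in> orbit act A x"
    then obtain \<sigma> where s: "\<sigma> \<in> fixing A" "y = act \<sigma> x" unfolding orbit_def by blast
    have iq: "inv \<pi> \<in> qaut" using pq qaut_inv by blast
    have sq: "\<sigma> \<in> qaut" using s fixing_qaut by blast
    have "act (\<sigma> \<circ> inv \<pi>) (act \<pi> x) = act \<sigma> (act (inv \<pi>) (act \<pi> x))"
      using act_comp[OF act sq iq] by simp
    then have "y = act (\<sigma> \<circ> inv \<pi>) (act \<pi> x)" using s act pq by simp
    moreover have "\<sigma> \<circ> inv \<pi> \<in> fixing A" using fixing_comp s(1) fixing_inv pf by blast
    ultimately show "y \<in> orbit act A (act \<pi> x)" unfolding orbit_def by blast
  qed
qed

lemma orbit_mem:
  assumes act: "is_qaction act" and y: "y \<in> orbit act A x"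
  shows "orbit act A y = orbit act A x"
proof -
  obtain \<sigma> where s: "\<sigma> \<in> fixing A" "y = act \<sigma> x" using y unfolding orbit_def by blast
  then show ?thesis using orbit_act[OF act s(1)] by simp
qed


locale setting =
  fixes act :: "(rat \<Rightarrow> rat) \<Rightarrow> 'x \<Rightarrow> 'x" and X :: "'x set" and A :: "rat set"
  assumes act: "is_qaction act" and fA: "finite A" and sX: "supports (set_act act) A X"
    and fsX: "\<forall>x\<in>X. fin_supp act x" and orbF: "finite (orbit act A ` X)"
begin

lemma sact: "is_qaction (set_act act)" using set_act_qaction[OF act] .
lemma ssact: "is_qaction (set_act (set_act act))" using set_act_qaction[OF sact] .

lemma X_inv: "\<pi> \<in> fixing A \<Longrightarrow> act \<pi> ` X = X"
  using supportsD[OF sX] unfolding set_act_def by blast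

lemma X_mem: "\<pi> \<in> fixing A \<Longrightarrow> x \<in> X \<Longrightarrow> act \<pi> x \<in> X"
  using X_inv by blast

lemma fsI: "S \<subseteq> X \<Longrightarrow> finite C \<Longrightarrow> supports (set_act act) C S \<Longrightarrow> S \<in> fs_subsets act X"
  unfolding fs_subsets_def fin_supp_def by blast

lemma fsD: "S \<in> fs_subsets act X \<Longrightarrow> S \<subseteq> X \<and> (\<exists>C. finite C \<and> supports (set_act act) C S)"
  unfolding fs_subsets_def fin_supp_def by blast

lemma fs_act: "\<pi> \<in> fixing A \<Longrightarrow> S \<in> fs_subsets act X \<Longrightarrow> act \<pi> ` S \<in> fs_subsets act X"
proof -
  assume pf: "\<pi> \<in> fixing A" and S: "S \<in> fs_subsets act X"
  have pq: "\<pi> \<in> qaut" using pf fixing_qaut by blast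
  have "act \<pi> ` S \<subseteq> X" using S X_inv[OF pf] unfolding fs_subsets_def by blast
  moreover have "fin_supp (set_act act) (set_act act \<pi> S)"
    using fin_supp_act[OF sact pq] S unfolding fs_subsets_def by blast
  ultimately show ?thesis unfolding fs_subsets_def set_act_def by blast
qed

lemma ss_eq: "set_act (set_act act) \<pi> U = (\<lambda>S. act \<pi> ` S) ` U"
  unfolding set_act_def ..

lemma ss_mem:
  assumes pq: "\<pi> \<in> qaut"
  shows "S \<in> set_act (set_act act) \<pi> U \<longleftrightarrow> act (inv \<pi>) ` S \<in> U"
proof
  assume "S \<in> set_act (set_act act) \<pi> U"
  then obtain T where T: "T \<in> U" "S = act \<pi> ` T" unfolding ss_eq by blast
  have "act (inv \<pi>) ` S = T" using T(2) act pq by (simp add: image_image)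
  then show "act (inv \<pi>) ` S \<in> U" using T(1) by simp
next
  assume a: "act (inv \<pi>) ` S \<in> U"
  have "act \<pi> ` (act (inv \<pi>) ` S) = S" using act pq by (simp add: image_image)
  then show "S \<in> set_act (set_act act) \<pi> U" unfolding ss_eq using a by (metis image_eqI)
qed

lemma stone_act:
  assumes pf: "\<pi> \<in> fixing A" and U: "U \<in> stone act X"
  shows "set_act (set_act act) \<pi> U \<in> stone act X"
proof -
  have pq: "\<pi> \<in> qaut" using pf fixing_qaut by blast
  have ipf: "inv \<pi> \<in> fixing A" using pf fixing_inv by blast
  have u: "is_ultrafilter_on X (fs_subsets act X) U" using U unfolding stone_def by blast
  have "is_ultrafilter_on X (fs_subsets act X) ((\<lambda>S. act \<pi> ` S) ` U)"
  proof (rule uf_image[OF u])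
    show "act \<pi> ` X = X" using X_inv[OF pf] .
    show "\<And>S. S \<in> fs_subsets act X \<Longrightarrow> act \<pi> ` S \<in> fs_subsets act X" using fs_act[OF pf] .
    show "\<And>S. S \<in> fs_subsets act X \<Longrightarrow> act (inv \<pi>) ` S \<in> fs_subsets act X" using fs_act[OF ipf] .
    show "\<And>x. act \<pi> (act (inv \<pi>) x) = x" using act pq by simp
    show "\<And>x. act (inv \<pi>) (act \<pi> x) = x" using act pq by simp
  qed
  moreover have "fin_supp (set_act (set_act act)) (set_act (set_act act) \<pi> U)"
    using fin_supp_act[OF ssact pq] U unfolding stone_def by blast
  ultimately show ?thesis unfolding stone_def ss_eq by blast
qed

lemma stone_supp: "supports (set_act (set_act (set_act act))) A (stone act X)"
  unfolding supports_def
proof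
  fix \<pi> assume pf: "\<pi> \<in> fixing A"
  have pq: "\<pi> \<in> qaut" using pf fixing_qaut by blast
  have ipf: "inv \<pi> \<in> fixing A" using pf fixing_inv by blast
  show "set_act (set_act (set_act act)) \<pi> (stone act X) = stone act X"
  proof
    show "set_act (set_act (set_act act)) \<pi> (stone act X) \<subseteq> stone act X"
      unfolding set_act_def[of "set_act (set_act act)"] using stone_act[OF pf] by blast
    show "stone act X \<subseteq> set_act (set_act (set_act act)) \<pi> (stone act X)"
    proof
      fix U assume U: "U \<in> stone act X"
      have "set_act (set_act act) \<pi> (set_act (set_act act) (inv \<pi>) U) = U"
        using act_inv_r[OF ssact pq] .
      moreover have "set_act (set_act act) (inv \<pi>) U \<in> stone act X" using stone_act[OF ipf U] .
      ultimately show "U \<in> set_act (set_act (set_act act)) \<pi> (stone act X)"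
        unfolding set_act_def[of "set_act (set_act act)"] by (metis image_eqI)
    qed
  qed
qed

lemma stone_uf: "U \<in> stone act X \<Longrightarrow> is_ultrafilter_on X (fs_subsets act X) U"
  unfolding stone_def by blast

section \<open>Orbits\<close>

abbreviation "Orbs \<equiv> orbit act A ` X"

lemma orbit_closed:
  assumes pf: "\<pi> \<in> fixing A" and y: "y \<in> orbit act A x"
  shows "act \<pi> y \<in> orbit act A x"
proof -
  have "act \<pi> y \<in> orbit act A y" using pf unfolding orbit_def by blast
  then show ?thesis using orbit_mem[OF act y] by simp
qed

lemma orbit_sub: "x \<in> X \<Longrightarrow> orbit act A x \<subseteq> X"
  unfolding orbit_def using X_mem by blast

lemma orbit_inv: "\<pi> \<in> fixing A \<Longrightarrow> act \<pi> ` orbit act A x = orbit act A x"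
proof
  assume pf: "\<pi> \<in> fixing A"
  have pq: "\<pi> \<in> qaut" using pf fixing_qaut by blast
  show "act \<pi> ` orbit act A x \<subseteq> orbit act A x" using orbit_closed[OF pf] by blast
  show "orbit act A x \<subseteq> act \<pi> ` orbit act A x"
  proof
    fix y assume y: "y \<in> orbit act A x"
    have "act (inv \<pi>) y \<in> orbit act A x" using orbit_closed[OF fixing_inv[OF pf] y] .
    moreover have "y = act \<pi> (act (inv \<pi>) y)" using act pq by simp
    ultimately show "y \<in> act \<pi> ` orbit act A x" by blast
  qed
qed

lemma orbit_fs: "x \<in> X \<Longrightarrow> orbit act A x \<in> fs_subsets act X"
proof -
  assume x: "x \<in> X"
  have "supports (set_act act) A (orbit act A x)"
    unfolding supports_def set_act_def using orbit_inv by blast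
  then show ?thesis using fsI[OF orbit_sub[OF x] fA] by blast
qed

lemma Omega_ex: "U \<in> stone act X \<Longrightarrow> \<exists>W\<in>Orbs. W \<in> U"
proof -
  assume U: "U \<in> stone act X"
  have "Orbs \<subseteq> fs_subsets act X" using orbit_fs by blast
  moreover have "X \<subseteq> \<Union> Orbs" using orbit_self[OF act] by blast
  ultimately show ?thesis using uf_cover[OF stone_uf[OF U] orbF] by blast
qed

lemma fs_orbit: "x \<in> X \<Longrightarrow> y \<in> orbit act A x \<Longrightarrow> fin_supp act y"
  using orbit_sub fsX by blast

lemma nsp_orbit: "x \<in> X \<Longrightarrow> y \<in> orbit act A x \<Longrightarrow> nsp act y = nsp act x"
proof -
  assume x: "x \<in> X" and y: "y \<in> orbit act A x"
  obtain \<sigma> where s: "\<sigma> \<in> fixing A" "y = act \<sigma> x" using y unfolding orbit_def by blast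
  then show ?thesis using nsp_act[OF act fixing_qaut[OF s(1)]] fsX x by simp
qed

lemma nsp_bounded: "\<exists>N. \<forall>x\<in>X. nsp act x < N"
proof -
  have "finite (nsp act ` X)"
  proof (rule finite_factor[OF orbF], intro ballI impI)
    fix x y assume x: "x \<in> X" and y: "y \<in> X" and e: "orbit act A x = orbit act A y"
    have "y \<in> orbit act A x" using e orbit_self[OF act] by blast
    then show "nsp act x = nsp act y" using nsp_orbit[OF x] by simp
  qed
  then obtain N where "\<forall>n\<in>nsp act ` X. n \<le> N" using finite_nat_set_iff_bounded_le by blast
  then have "\<forall>x\<in>X. nsp act x < Suc N" by auto
  then show ?thesis by blast
qed

definition NN where "NN = (SOME N. \<forall>x\<in>X. nsp act x < N)"

lemma NN: "x \<in> X \<Longrightarrow> nsp act x < NN"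
  using someI_ex[OF nsp_bounded] unfolding NN_def by blast

section \<open>Coordinate sets\<close>

definition Lset where "Lset j q = {x\<in>X. j < nsp act x \<and> q < crd act x j}"
definition Eset where "Eset j q = {x\<in>X. j < nsp act x \<and> crd act x j = q}"

lemma Lset_act1:
  assumes pf: "\<pi> \<in> fixing A" and x: "x \<in> Lset j q"
  shows "act \<pi> x \<in> Lset j (\<pi> q)"
proof -
  have pq: "\<pi> \<in> qaut" using pf fixing_qaut by blast
  have xX: "x \<in> X" and j: "j < nsp act x" and q: "q < crd act x j" using x by (auto simp: Lset_def)
  have fs: "fin_supp act x" using fsX xX by blast
  have "act \<pi> x \<in> X" using X_mem[OF pf xX] .
  moreover have "j < nsp act (act \<pi> x)" using nsp_act[OF act pq fs] j by simp
  moreover have "\<pi> q < crd act (act \<pi> x) j" using crd_act[OF act pq fs j] q pq by simp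
  ultimately show ?thesis by (simp add: Lset_def)
qed

lemma Eset_act1:
  assumes pf: "\<pi> \<in> fixing A" and x: "x \<in> Eset j q"
  shows "act \<pi> x \<in> Eset j (\<pi> q)"
proof -
  have pq: "\<pi> \<in> qaut" using pf fixing_qaut by blast
  have xX: "x \<in> X" and j: "j < nsp act x" and q: "crd act x j = q" using x by (auto simp: Eset_def)
  have fs: "fin_supp act x" using fsX xX by blast
  have "act \<pi> x \<in> X" using X_mem[OF pf xX] .
  moreover have "j < nsp act (act \<pi> x)" using nsp_act[OF act pq fs] j by simp
  moreover have "crd act (act \<pi> x) j = \<pi> q" using crd_act[OF act pq fs j] q by simp
  ultimately show ?thesis by (simp add: Eset_def)
qed

lemma Lset_act:
  assumes pf: "\<pi> \<in> fixing A"
  shows "act \<pi> ` Lset j q = Lset j (\<pi> q)"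
proof
  have pq: "\<pi> \<in> qaut" using pf fixing_qaut by blast
  show "act \<pi> ` Lset j q \<subseteq> Lset j (\<pi> q)" using Lset_act1[OF pf] by blast
  show "Lset j (\<pi> q) \<subseteq> act \<pi> ` Lset j q"
  proof
    fix y assume y: "y \<in> Lset j (\<pi> q)"
    have "act (inv \<pi>) y \<in> Lset j (inv \<pi> (\<pi> q))" using Lset_act1[OF fixing_inv[OF pf] y] .
    then have "act (inv \<pi>) y \<in> Lset j q" using pq by simp
    moreover have "y = act \<pi> (act (inv \<pi>) y)" using act pq by simp
    ultimately show "y \<in> act \<pi> ` Lset j q" by blast
  qed
qed

lemma Eset_act:
  assumes pf: "\<pi> \<in> fixing A"
  shows "act \<pi> ` Eset j q = Eset j (\<pi> q)"
proof
  have pq: "\<pi> \<in> qaut" using pf fixing_qaut by blast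
  show "act \<pi> ` Eset j q \<subseteq> Eset j (\<pi> q)" using Eset_act1[OF pf] by blast
  show "Eset j (\<pi> q) \<subseteq> act \<pi> ` Eset j q"
  proof
    fix y assume y: "y \<in> Eset j (\<pi> q)"
    have "act (inv \<pi>) y \<in> Eset j (inv \<pi> (\<pi> q))" using Eset_act1[OF fixing_inv[OF pf] y] .
    then have "act (inv \<pi>) y \<in> Eset j q" using pq by simp
    moreover have "y = act \<pi> (act (inv \<pi>) y)" using act pq by simp
    ultimately show "y \<in> act \<pi> ` Eset j q" by blast
  qed
qed

lemma Lset_fs: "Lset j q \<in> fs_subsets act X"
proof (rule fsI)
  show "Lset j q \<subseteq> X" by (auto simp: Lset_def)
  show "finite (insert q A)" using fA by simp
  show "supports (set_act act) (insert q A) (Lset j q)"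
    unfolding supports_def set_act_def
  proof
    fix \<pi> assume pf: "\<pi> \<in> fixing (insert q A)"
    then have "\<pi> \<in> fixing A" "\<pi> q = q" unfolding fixing_def by auto
    then show "act \<pi> ` Lset j q = Lset j q" using Lset_act by simp
  qed
qed

lemma Eset_fs: "Eset j q \<in> fs_subsets act X"
proof (rule fsI)
  show "Eset j q \<subseteq> X" by (auto simp: Eset_def)
  show "finite (insert q A)" using fA by simp
  show "supports (set_act act) (insert q A) (Eset j q)"
    unfolding supports_def set_act_def
  proof
    fix \<pi> assume pf: "\<pi> \<in> fixing (insert q A)"
    then have "\<pi> \<in> fixing A" "\<pi> q = q" unfolding fixing_def by auto
    then show "act \<pi> ` Eset j q = Eset j q" using Eset_act by simp
  qed
qed

end


context setting
begin

definition Lo where "Lo U j = {q. Lset j q \<in> U}"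
definition Eq where "Eq U j = {q. Eset j q \<in> U}"
definition Phi where "Phi U = (Orbs \<inter> U, Lo U, Eq U)"

lemma Phi_act:
  assumes pf: "\<pi> \<in> fixing A"
  shows "Phi (set_act (set_act act) \<pi> U) = (Orbs \<inter> U, \<lambda>j. \<pi> ` Lo U j, \<lambda>j. \<pi> ` Eq U j)"
proof -
  have pq: "\<pi> \<in> qaut" using pf fixing_qaut by blast
  have ipf: "inv \<pi> \<in> fixing A" using pf fixing_inv by blast
  have o: "Orbs \<inter> set_act (set_act act) \<pi> U = Orbs \<inter> U"
  proof -
    have "W \<in> set_act (set_act act) \<pi> U \<longleftrightarrow> W \<in> U" if WO: "W \<in> Orbs" for W
    proof -
      obtain x where "W = orbit act A x" using WO by blast
      then have "act (inv \<pi>) ` W = W" using orbit_inv[OF ipf] by simp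
      then show ?thesis using ss_mem[OF pq] by simp
    qed
    then show ?thesis by blast
  qed
  have l: "Lo (set_act (set_act act) \<pi> U) j = \<pi> ` Lo U j" for j
  proof
    show "Lo (set_act (set_act act) \<pi> U) j \<subseteq> \<pi> ` Lo U j"
    proof
      fix q assume "q \<in> Lo (set_act (set_act act) \<pi> U) j"
      then have "act (inv \<pi>) ` Lset j q \<in> U" using ss_mem[OF pq] by (simp add: Lo_def)
      then have "inv \<pi> q \<in> Lo U j" using Lset_act[OF ipf] by (simp add: Lo_def)
      moreover have "q = \<pi> (inv \<pi> q)" using pq by simp
      ultimately show "q \<in> \<pi> ` Lo U j" by blast
    qed
    show "\<pi> ` Lo U j \<subseteq> Lo (set_act (set_act act) \<pi> U) j"
    proof
      fix q assume "q \<in> \<pi> ` Lo U j"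
      then obtain r where r: "r \<in> Lo U j" "q = \<pi> r" by blast
      have "act (inv \<pi>) ` Lset j q = Lset j r" using Lset_act[OF ipf] r(2) pq by simp
      then show "q \<in> Lo (set_act (set_act act) \<pi> U) j" using r(1) ss_mem[OF pq] by (simp add: Lo_def)
    qed
  qed
  have e: "Eq (set_act (set_act act) \<pi> U) j = \<pi> ` Eq U j" for j
  proof
    show "Eq (set_act (set_act act) \<pi> U) j \<subseteq> \<pi> ` Eq U j"
    proof
      fix q assume "q \<in> Eq (set_act (set_act act) \<pi> U) j"
      then have "act (inv \<pi>) ` Eset j q \<in> U" using ss_mem[OF pq] by (simp add: Eq_def)
      then have "inv \<pi> q \<in> Eq U j" using Eset_act[OF ipf] by (simp add: Eq_def)
      moreover have "q = \<pi> (inv \<pi> q)" using pq by simp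
      ultimately show "q \<in> \<pi> ` Eq U j" by blast
    qed
    show "\<pi> ` Eq U j \<subseteq> Eq (set_act (set_act act) \<pi> U) j"
    proof
      fix q assume "q \<in> \<pi> ` Eq U j"
      then obtain r where r: "r \<in> Eq U j" "q = \<pi> r" by blast
      have "act (inv \<pi>) ` Eset j q = Eset j r" using Eset_act[OF ipf] r(2) pq by simp
      then show "q \<in> Eq (set_act (set_act act) \<pi> U) j" using r(1) ss_mem[OF pq] by (simp add: Eq_def)
    qed
  qed
  show ?thesis unfolding Phi_def using o l e by auto
qed

definition Vs where
  "Vs L E j c = (if c \<in> L j then Lset j c else X - Lset j c) \<inter> (if c \<in> E j then Eset j c else X - Eset j c)"

definition Rset where
  "Rset L E W n C = W \<inter> (X \<inter> \<Inter> ((\<lambda>(j, c). Vs L E j c) ` ({..<n} \<times> C)))"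

lemma R_in:
  assumes U: "U \<in> stone act X" and W: "W \<in> U" and fC: "finite C"
  shows "Rset (Lo U) (Eq U) W n C \<in> U"
proof -
  have u: "is_ultrafilter_on X (fs_subsets act X) U" using stone_uf[OF U] .
  have V: "Vs (Lo U) (Eq U) j c \<in> U" for j c
  proof -
    have "(if c \<in> Lo U j then Lset j c else X - Lset j c) \<in> U"
      using uf_compl[OF u Lset_fs] by (simp add: Lo_def)
    moreover have "(if c \<in> Eq U j then Eset j c else X - Eset j c) \<in> U"
      using uf_compl[OF u Eset_fs] by (simp add: Eq_def)
    ultimately show ?thesis unfolding Vs_def using uf_int[OF u] by blast
  qed
  have "X \<inter> \<Inter> ((\<lambda>(j, c). Vs (Lo U) (Eq U) j c) ` ({..<n} \<times> C)) \<in> U"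
    by (rule uf_finite_inter[OF u]) (use fC V in auto)
  then show ?thesis unfolding Rset_def using uf_int[OF u W] by blast
qed

lemma R_cell:
  assumes x0: "x0 \<in> X" and fC: "finite C"
    and x: "x \<in> Rset L E (orbit act A x0) (nsp act x0) C"
    and y: "y \<in> Rset L E (orbit act A x0) (nsp act x0) C"
  shows "\<exists>g\<in>fixing C. act g x = y"
proof -
  have xo: "x \<in> orbit act A x0" and yo: "y \<in> orbit act A x0" using x y by (auto simp: Rset_def)
  have xX: "x \<in> X" and yX: "y \<in> X" using xo yo orbit_sub[OF x0] by auto
  have fsx: "fin_supp act x" using fsX xX by blast
  have nx: "nsp act x = nsp act x0" and ny: "nsp act y = nsp act x0"
    using nsp_orbit[OF x0] xo yo by auto
  obtain \<sigma> where s: "\<sigma> \<in> fixing A" "x = act \<sigma> x0" using xo unfolding orbit_def by blast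
  obtain \<sigma>' where s': "\<sigma>' \<in> fixing A" "y = act \<sigma>' x0" using yo unfolding orbit_def by blast
  have sq: "\<sigma> \<in> qaut" "\<sigma>' \<in> qaut" using s s' fixing_qaut by auto
  define h where "h = \<sigma>' \<circ> inv \<sigma>"
  have hq: "h \<in> qaut" unfolding h_def using sq qaut_inv qaut_comp by blast
  have "act h x = act \<sigma>' (act (inv \<sigma>) (act \<sigma> x0))" unfolding h_def s(2)
    using act_comp[OF act sq(2) qaut_inv[OF sq(1)]] by simp
  then have hy: "y = act h x" using s'(2) act sq(1) by simp
  have VV: "z \<in> Vs L E j c" if z: "z \<in> Rset L E (orbit act A x0) (nsp act x0) C" and j: "j < nsp act x0" and c: "c \<in> C" for z j c
    using z j c unfolding Rset_def by blast
  have lt: "\<forall>j<nsp act x. \<forall>c\<in>C. c < crd act x j \<longleftrightarrow> c < crd act y j"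
  proof (intro allI impI ballI)
    fix j c assume j: "j < nsp act x" and c: "c \<in> C"
    have vx: "x \<in> Vs L E j c" using VV[OF x _ c] j nx by simp
    have vy: "y \<in> Vs L E j c" using VV[OF y _ c] j nx by simp
    have "x \<in> Lset j c \<longleftrightarrow> c \<in> L j" using vx unfolding Vs_def by (auto split: if_splits)
    moreover have "y \<in> Lset j c \<longleftrightarrow> c \<in> L j" using vy unfolding Vs_def by (auto split: if_splits)
    moreover have "x \<in> Lset j c \<longleftrightarrow> c < crd act x j" using xX j by (simp add: Lset_def)
    moreover have "y \<in> Lset j c \<longleftrightarrow> c < crd act y j" using yX j nx ny by (simp add: Lset_def)
    ultimately show "c < crd act x j \<longleftrightarrow> c < crd act y j" by blast
  qed
  have eq: "\<forall>j<nsp act x. \<forall>c\<in>C. crd act x j = c \<longleftrightarrow> crd act y j = c"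
  proof (intro allI impI ballI)
    fix j c assume j: "j < nsp act x" and c: "c \<in> C"
    have vx: "x \<in> Vs L E j c" using VV[OF x _ c] j nx by simp
    have vy: "y \<in> Vs L E j c" using VV[OF y _ c] j nx by simp
    have "x \<in> Eset j c \<longleftrightarrow> c \<in> E j" using vx unfolding Vs_def by (auto split: if_splits)
    moreover have "y \<in> Eset j c \<longleftrightarrow> c \<in> E j" using vy unfolding Vs_def by (auto split: if_splits)
    moreover have "x \<in> Eset j c \<longleftrightarrow> crd act x j = c" using xX j by (simp add: Eset_def)
    moreover have "y \<in> Eset j c \<longleftrightarrow> crd act y j = c" using yX j nx ny by (simp add: Eset_def)
    ultimately show "crd act x j = c \<longleftrightarrow> crd act y j = c" by blast
  qed
  show ?thesis using cell_lemma[OF act fsx hq hy fC lt eq] .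
qed

lemma inj_Phi_sub:
  assumes U: "U \<in> stone act X" and U': "U' \<in> stone act X" and e: "Phi U = Phi U'"
  shows "U \<subseteq> U'"
proof
  fix S assume S: "S \<in> U"
  have u: "is_ultrafilter_on X (fs_subsets act X) U" using stone_uf[OF U] .
  have u': "is_ultrafilter_on X (fs_subsets act X) U'" using stone_uf[OF U'] .
  have Sfs: "S \<in> fs_subsets act X" using uf_sub[OF u S] .
  obtain D where D: "finite D" "supports (set_act act) D S" using fsD[OF Sfs] by blast
  obtain W where W: "W \<in> Orbs" "W \<in> U" using Omega_ex[OF U] by blast
  obtain x0 where x0: "x0 \<in> X" "W = orbit act A x0" using W(1) by blast
  have eO: "Orbs \<inter> U = Orbs \<inter> U'" and eL: "Lo U = Lo U'" and eE: "Eq U = Eq U'"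
    using e unfolding Phi_def by auto
  have W': "W \<in> U'" using W eO by blast
  define R where "R = Rset (Lo U) (Eq U) W (nsp act x0) D"
  have RU: "R \<in> U" unfolding R_def using R_in[OF U W(2) D(1)] .
  have RU': "R \<in> U'" unfolding R_def eL eE using R_in[OF U' W' D(1)] .
  have "S \<inter> R \<noteq> {}" using uf_disj[OF u S RU] .
  then obtain x where xS: "x \<in> S" and xR: "x \<in> R" by blast
  have "R \<subseteq> S"
  proof
    fix y assume yR: "y \<in> R"
    obtain g where g: "g \<in> fixing D" "act g x = y"
      using R_cell[OF x0(1) D(1), of x "Lo U" "Eq U" y] xR yR x0(2) unfolding R_def by blast
    have "act g ` S = S" using supportsD[OF D(2) g(1)] unfolding set_act_def .
    then show "y \<in> S" using xS g(2) by blast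
  qed
  then show "S \<in> U'" using uf_up[OF u' RU' Sfs] by blast
qed

lemma inj_Phi:
  assumes "U \<in> stone act X" "U' \<in> stone act X" "Phi U = Phi U'"
  shows "U = U'"
  using inj_Phi_sub[OF assms] inj_Phi_sub[OF assms(2,1) assms(3)[symmetric]] by blast

end


lemma ot_hom:
  fixes P P' :: "nat \<Rightarrow> rat" and A :: "rat set"
  assumes fA: "finite A"
    and e1: "\<forall>i<M. \<forall>k<M. P i < P k \<longleftrightarrow> P' i < P' k"
    and e2: "\<forall>i<M. \<forall>a\<in>A. P i < a \<longleftrightarrow> P' i < a"
    and e3: "\<forall>i<M. \<forall>a\<in>A. a < P i \<longleftrightarrow> a < P' i"
  shows "\<exists>\<pi>\<in>fixing A. \<forall>i<M. \<pi> (P i) = P' i"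
proof -
  have eqv: "P i = P k \<longleftrightarrow> P' i = P' k" if "i < M" "k < M" for i k
    using e1 that by (metis linorder_neqE less_irrefl)
  have eqa: "P i = a \<longleftrightarrow> P' i = a" if "i < M" "a \<in> A" for i a
    using e2 e3 that by (metis linorder_neqE less_irrefl)
  define p where "p t = (if t \<in> A then t else P' (SOME i. i < M \<and> P i = t))" for t
  have pA: "p a = a" if "a \<in> A" for a using that by (simp add: p_def)
  have pP: "p (P i) = P' i" if i: "i < M" for i
  proof (cases "P i \<in> A")
    case True
    then have "P' i = P i" using eqa[OF i True] by simp
    then show ?thesis using True by (simp add: p_def)
  next
    case False
    have "\<exists>k. k < M \<and> P k = P i" using i by blast
    then have k: "(SOME k. k < M \<and> P k = P i) < M \<and> P (SOME k. k < M \<and> P k = P i) = P i"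
      by (rule someI_ex)
    then have "P' (SOME k. k < M \<and> P k = P i) = P' i" using eqv i by blast
    then show ?thesis using False by (simp add: p_def)
  qed
  define F where "F = A \<union> P ` {..<M}"
  have fF: "finite F" using fA by (simp add: F_def)
  have mono: "\<forall>s\<in>F. \<forall>t\<in>F. s < t \<longrightarrow> p s < p t"
  proof (intro ballI impI)
    fix s t assume s: "s \<in> F" and t: "t \<in> F" and st: "s < t"
    show "p s < p t"
    proof (cases "s \<in> A")
      case sA: True
      show ?thesis
      proof (cases "t \<in> A")
        case True then show ?thesis using sA st pA by simp
      next
        case False
        then obtain k where k: "k < M" "t = P k" using t by (auto simp: F_def)
        then have "s < P' k" using e3 sA st by blast
        then show ?thesis using sA k pA pP by simp
      qed
    next
      case sA: False
      then obtain i where i: "i < M" "s = P i" using s by (auto simp: F_def)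
      show ?thesis
      proof (cases "t \<in> A")
        case True
        then have "P' i < t" using e2 i st by blast
        then show ?thesis using True i pA pP by simp
      next
        case False
        then obtain k where k: "k < M" "t = P k" using t by (auto simp: F_def)
        then have "P' i < P' k" using e1 i st by blast
        then show ?thesis using i k pP by simp
      qed
    qed
  qed
  obtain \<pi> where g: "\<pi> \<in> qaut" "\<forall>t\<in>F. \<pi> t = p t" using homogeneous[OF fF mono] by blast
  have "\<forall>a\<in>A. \<pi> a = a" using g(2) pA unfolding F_def by simp
  then have "\<pi> \<in> fixing A" using g(1) unfolding fixing_def by blast
  moreover have "\<forall>i<M. \<pi> (P i) = P' i" using g(2) pP unfolding F_def by simp
  ultimately show ?thesis by blast
qed

lemma shape_match:
  assumes s: "shape D = shape D'" and s5: "shape D < 5" and pq: "\<pi> \<in> qaut"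
    and pt: "\<pi> (pt D) = pt D'"
  shows "D' = \<pi> ` D"
proof -
  have "shape D = 0 \<or> shape D = 1 \<or> shape D = 2 \<or> shape D = 3 \<or> shape D = 4" using s5 by auto
  then show ?thesis
  proof (elim disjE)
    assume "shape D = 0" then show ?thesis using s shape0 by (metis image_empty)
  next
    assume "shape D = 1" then show ?thesis using s shape1 qaut_image_UNIV[OF pq] by metis
  next
    assume a: "shape D = 2"
    then have "D = {..<pt D}" "D' = {..<pt D'}" using s shape2 by metis+
    then show ?thesis using qaut_image_lessThan[OF pq] pt by metis
  next
    assume a: "shape D = 3"
    then have "D = {..pt D}" "D' = {..pt D'}" using s shape3 by metis+
    then show ?thesis using qaut_image_atMost[OF pq] pt by metis
  next
    assume a: "shape D = 4"
    then have "D = {pt D}" "D' = {pt D'}" using s shape4 by metis+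
    then show ?thesis using pt by (metis image_empty image_insert)
  qed
qed

context setting
begin

lemma stone_fs: "U \<in> stone act X \<Longrightarrow> \<exists>B0. finite B0 \<and> supports (set_act (set_act act)) B0 U"
  unfolding stone_def fin_supp_def by blast

lemma Lo_inv:
  assumes U: "U \<in> stone act X" and B0: "supports (set_act (set_act act)) B0 U"
    and pf: "\<pi> \<in> fixing (A \<union> B0)"
  shows "\<pi> ` Lo U j = Lo U j" "\<pi> ` Eq U j = Eq U j"
proof -
  have pA: "\<pi> \<in> fixing A" using pf fixing_mono[of A "A \<union> B0"] by blast
  have pB: "\<pi> \<in> fixing B0" using pf fixing_mono[of B0 "A \<union> B0"] by blast
  have "set_act (set_act act) \<pi> U = U" using supportsD[OF B0 pB] .
  then have "Phi U = (Orbs \<inter> U, \<lambda>j. \<pi> ` Lo U j, \<lambda>j. \<pi> ` Eq U j)" using Phi_act[OF pA, of U] by simp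
  then have "Lo U = (\<lambda>j. \<pi> ` Lo U j)" "Eq U = (\<lambda>j. \<pi> ` Eq U j)" unfolding Phi_def by auto
  then show "\<pi> ` Lo U j = Lo U j" "\<pi> ` Eq U j = Eq U j" by metis+
qed

lemma Lo_shape:
  assumes U: "U \<in> stone act X"
  shows "shape (Lo U j) < 5"
proof -
  have u: "is_ultrafilter_on X (fs_subsets act X) U" using stone_uf[OF U] .
  obtain B0 where B0: "finite B0" "supports (set_act (set_act act)) B0 U" using stone_fs[OF U] by blast
  have "Lo U j = {} \<or> Lo U j = UNIV \<or> (\<exists>b. Lo U j = {..<b}) \<or> (\<exists>b. Lo U j = {..b})"
  proof (rule downclosed_class[of "A \<union> B0"])
    show "finite (A \<union> B0)" using fA B0(1) by simp
    show "\<And>q q'. q \<in> Lo U j \<Longrightarrow> q' < q \<Longrightarrow> q' \<in> Lo U j"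
    proof -
      fix q q' assume q: "q \<in> Lo U j" and qq: "q' < q"
      have "Lset j q \<subseteq> Lset j q'" using qq by (auto simp: Lset_def)
      then show "q' \<in> Lo U j" using q uf_up[OF u _ Lset_fs] by (simp add: Lo_def)
    qed
    show "\<And>\<pi> q. \<pi> \<in> fixing (A \<union> B0) \<Longrightarrow> q \<in> Lo U j \<Longrightarrow> \<pi> q \<in> Lo U j"
      using Lo_inv(1)[OF U B0(2)] by blast
  qed
  then show ?thesis using shape_lt5 by blast
qed

lemma Eq_shape:
  assumes U: "U \<in> stone act X"
  shows "shape (Eq U j) < 5"
proof -
  have u: "is_ultrafilter_on X (fs_subsets act X) U" using stone_uf[OF U] .
  have "Eq U j = {} \<or> (\<exists>b. Eq U j = {b})"
  proof (cases "Eq U j = {}")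
    case False
    then obtain b where b: "b \<in> Eq U j" by blast
    have "Eq U j = {b}"
    proof
      show "{b} \<subseteq> Eq U j" using b by simp
      show "Eq U j \<subseteq> {b}"
      proof
        fix q assume q: "q \<in> Eq U j"
        show "q \<in> {b}"
        proof (rule ccontr)
          assume "q \<notin> {b}"
          then have "Eset j q \<inter> Eset j b = {}" by (auto simp: Eset_def)
          moreover have "Eset j q \<in> U" "Eset j b \<in> U" using q b by (auto simp: Eq_def)
          ultimately show False using uf_disj[OF u] by metis
        qed
      qed
    qed
    then show ?thesis by blast
  qed simp
  then show ?thesis using shape_lt5 by blast
qed

lemma Lo_big:
  assumes U: "U \<in> stone act X" and j: "NN \<le> j"
  shows "Lo U j = {}" "Eq U j = {}"
proof -
  have u: "is_ultrafilter_on X (fs_subsets act X) U" using stone_uf[OF U] .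
  have "Lset j q = {}" for q using NN j by (force simp: Lset_def)
  then show "Lo U j = {}" using uf_empty[OF u] by (simp add: Lo_def)
  have "Eset j q = {}" for q using NN j by (force simp: Eset_def)
  then show "Eq U j = {}" using uf_empty[OF u] by (simp add: Eq_def)
qed

definition Pt where "Pt U i = (if i < NN then pt (Lo U i) else pt (Eq U (i - NN)))"

definition code where
  "code U = (Orbs \<inter> U, {(j, shape (Lo U j)) | j. j < NN}, {(j, shape (Eq U j)) | j. j < NN},
     {(i, k). i < 2 * NN \<and> k < 2 * NN \<and> Pt U i < Pt U k},
     {(i, a). i < 2 * NN \<and> a \<in> A \<and> Pt U i < a},
     {(i, a). i < 2 * NN \<and> a \<in> A \<and> a < Pt U i})"

lemma code_range:
  "code U \<in> Pow Orbs \<times> Pow ({..<NN} \<times> {..5::nat}) \<times> Pow ({..<NN} \<times> {..5::nat}) \<times>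
     Pow ({..<2*NN} \<times> {..<2*NN}) \<times> Pow ({..<2*NN} \<times> A) \<times> Pow ({..<2*NN} \<times> A)"
  unfolding code_def using shape_le by auto

lemma code_finite: "finite (code ` S)"
proof (rule finite_subset)
  show "code ` S \<subseteq> Pow Orbs \<times> Pow ({..<NN} \<times> {..5::nat}) \<times> Pow ({..<NN} \<times> {..5::nat}) \<times>
     Pow ({..<2*NN} \<times> {..<2*NN}) \<times> Pow ({..<2*NN} \<times> A) \<times> Pow ({..<2*NN} \<times> A)"
    using code_range by blast
  show "finite (Pow Orbs \<times> Pow ({..<NN} \<times> {..5::nat}) \<times> Pow ({..<NN} \<times> {..5::nat}) \<times>
     Pow ({..<2*NN} \<times> {..<2*NN}) \<times> Pow ({..<2*NN} \<times> A) \<times> Pow ({..<2*NN} \<times> A))"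
    using orbF fA by (simp add: finite_cartesian_product)
qed

lemma code_eq:
  assumes U: "U \<in> stone act X" and U': "U' \<in> stone act X" and e: "code U = code U'"
  shows "\<exists>\<pi>\<in>fixing A. U' = set_act (set_act act) \<pi> U"
proof -
  have eO: "Orbs \<inter> U = Orbs \<inter> U'"
    and eL: "{(j, shape (Lo U j)) | j. j < NN} = {(j, shape (Lo U' j)) | j. j < NN}"
    and eE: "{(j, shape (Eq U j)) | j. j < NN} = {(j, shape (Eq U' j)) | j. j < NN}"
    and e1: "{(i, k). i < 2 * NN \<and> k < 2 * NN \<and> Pt U i < Pt U k} = {(i, k). i < 2 * NN \<and> k < 2 * NN \<and> Pt U' i < Pt U' k}"
    and e2: "{(i, a). i < 2 * NN \<and> a \<in> A \<and> Pt U i < a} = {(i, a). i < 2 * NN \<and> a \<in> A \<and> Pt U' i < a}"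
    and e3: "{(i, a). i < 2 * NN \<and> a \<in> A \<and> a < Pt U i} = {(i, a). i < 2 * NN \<and> a \<in> A \<and> a < Pt U' i}"
    using e unfolding code_def by simp_all
  have o1: "\<forall>i<2*NN. \<forall>k<2*NN. Pt U i < Pt U k \<longleftrightarrow> Pt U' i < Pt U' k"
  proof (intro allI impI)
    fix i k assume "i < 2 * NN" "k < 2 * NN"
    then show "Pt U i < Pt U k \<longleftrightarrow> Pt U' i < Pt U' k"
      using e1 by (simp add: set_eq_iff) (metis (mono_tags, lifting) case_prod_conv mem_Collect_eq)
  qed
  have o2: "\<forall>i<2*NN. \<forall>a\<in>A. Pt U i < a \<longleftrightarrow> Pt U' i < a"
  proof (intro allI impI ballI)
    fix i a assume "i < 2 * NN" "a \<in> A"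
    then show "Pt U i < a \<longleftrightarrow> Pt U' i < a"
      using e2 by (simp add: set_eq_iff) (metis (mono_tags, lifting) case_prod_conv mem_Collect_eq)
  qed
  have o3: "\<forall>i<2*NN. \<forall>a\<in>A. a < Pt U i \<longleftrightarrow> a < Pt U' i"
  proof (intro allI impI ballI)
    fix i a assume "i < 2 * NN" "a \<in> A"
    then show "a < Pt U i \<longleftrightarrow> a < Pt U' i"
      using e3 by (simp add: set_eq_iff) (metis (mono_tags, lifting) case_prod_conv mem_Collect_eq)
  qed
  obtain \<pi> where pf: "\<pi> \<in> fixing A" and pP: "\<forall>i<2*NN. \<pi> (Pt U i) = Pt U' i"
    using ot_hom[OF fA o1 o2 o3] by blast
  have pq: "\<pi> \<in> qaut" using pf fixing_qaut by blast
  have sL: "shape (Lo U j) = shape (Lo U' j)" if j: "j < NN" for j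
  proof -
    have "(j, shape (Lo U j)) \<in> {(j, shape (Lo U' j)) | j. j < NN}" using eL j by blast
    then show ?thesis by auto
  qed
  have sE: "shape (Eq U j) = shape (Eq U' j)" if j: "j < NN" for j
  proof -
    have "(j, shape (Eq U j)) \<in> {(j, shape (Eq U' j)) | j. j < NN}" using eE j by blast
    then show ?thesis by auto
  qed
  have L: "Lo U' j = \<pi> ` Lo U j" for j
  proof (cases "j < NN")
    case True
    have "j < 2 * NN" using True by simp
    then have "\<pi> (Pt U j) = Pt U' j" using pP by blast
    then have "\<pi> (pt (Lo U j)) = pt (Lo U' j)" using True by (simp add: Pt_def)
    then show ?thesis using shape_match[OF sL[OF True] Lo_shape[OF U] pq] by simp
  next
    case False then show ?thesis using Lo_big[OF U] Lo_big[OF U'] by simp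
  qed
  have E: "Eq U' j = \<pi> ` Eq U j" for j
  proof (cases "j < NN")
    case True
    have "NN + j < 2 * NN" using True by simp
    then have "\<pi> (Pt U (NN + j)) = Pt U' (NN + j)" using pP by blast
    then have "\<pi> (pt (Eq U j)) = pt (Eq U' j)" by (simp add: Pt_def)
    then show ?thesis using shape_match[OF sE[OF True] Eq_shape[OF U] pq] by simp
  next
    case False then show ?thesis using Lo_big[OF U] Lo_big[OF U'] by simp
  qed
  have "Phi U' = Phi (set_act (set_act act) \<pi> U)"
    unfolding Phi_act[OF pf] unfolding Phi_def using eO L E by auto
  then have "U' = set_act (set_act act) \<pi> U" using inj_Phi[OF U' stone_act[OF pf U]] by simp
  then show ?thesis using pf by blast
qed

lemma stone_orbits_finite: "finite (orbit (set_act (set_act act)) A ` stone act X)"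
proof (rule finite_factor[OF code_finite], intro ballI impI)
  fix U U' assume U: "U \<in> stone act X" and U': "U' \<in> stone act X" and e: "code U = code U'"
  obtain \<pi> where pf: "\<pi> \<in> fixing A" and eq: "U' = set_act (set_act act) \<pi> U"
    using code_eq[OF U U' e] by blast
  show "orbit (set_act (set_act act)) A U = orbit (set_act (set_act act)) A U'"
    using orbit_act[OF ssact pf] eq by simp
qed

lemma stone_definable: "definable (set_act (set_act act)) (stone act X)"
  unfolding definable_def
proof (intro exI conjI)
  show "finite A" using fA .
  show "supports (set_act (set_act (set_act act))) A (stone act X)" using stone_supp .
  show "\<forall>U\<in>stone act X. fin_supp (set_act (set_act act)) U" unfolding stone_def by blast
  show "finite (orbit (set_act (set_act act)) A ` stone act X)" using stone_orbits_finite .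
qed

end

theorem mainTheorem12:
  fixes act :: "(rat \<Rightarrow> rat) \<Rightarrow> 'x \<Rightarrow> 'x" and X :: "'x set"
  assumes "is_qaction act"
    and "definable act X"
  shows "definable (set_act (set_act act)) (stone act X)"
proof -
  obtain A where A: "finite A" "supports (set_act act) A X" "\<forall>x\<in>X. fin_supp act x"
    "finite (orbit act A ` X)" using assms(2) unfolding definable_def by blast
  interpret setting act X A using assms(1) A by unfold_locales
  show ?thesis using stone_definable .
qed


end
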